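(* Let $G$ be a connected graph and $U \subseteq V(G)$ an uncountable set of vertices such that every $U$-rooted minor of $G$ with countable branch sets has countable colouring number. Let $(T,\mathcal V)$ be a slim $U$-rooted normal semi-partition tree of $G$ with $U \subseteq V(G(T))$, and let $\kappa = |T|$. Then $T$ can be written as a continuous increasing union $T=\bigcup_{i<\mathrm{cf}(\kappa)} T_i$ of infinite rooted subtrees $T_i$ with $|T_i|<|T|$ such that every $G(T_i)$ has finite adhesion in $G$ towards $U$.
   Context: Minors are given by disjoint connected branch sets; a minor is $U$-rooted if every branch set meets $U$. A graph has countable colouring number if its vertices admit a well-order in which each vertex is preceded by only finitely many of its neighbours. An order tree is a poset with unique minimal element in which every down-closure $\lceil t\rceil$ is well-ordered; $\mathring{\lceil t\rceil}=\lceil t\rceil\setminus\{t\}$; height of $t$ = order type of $\mathring{\lceil t\rceil}$; rooted subtree = down-closed subset. A $T$-graph is a graph on $T$ with comparable endvertices on every edge and with lower neighbours of each $t$ cofinal in $\mathring{\lceil t\rceil}$. $(T,(V_t)_{t\in T})$ with nonempty $V_t\subseteq V(G)$ is a normal semi-partition tree if the $V_t$ are pairwise disjoint, each $G[V_t]$ is connected, contracting each $V_t$ in $G[\bigcup_t V_t]$ gives a $T$-graph, and for every path in $G$ with at least one edge, endvertices in $V_t$ and $V_{t'}$, inner vertices outside $\bigcup V_s$ and no edges inside $G[\bigcup V_s]$, $t$ and $t'$ are comparable. It is slim if $|V_t|\le|\mathrm{height}(t)|+\aleph_0$, and $U$-rooted if every $V_t$ meets $U$. $G(S)=G[\bigcup_{t\in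 S}V_t]$. An induced subgraph $H$ has finite adhesion in $G$ towards $U$ if every component of $G-H$ containing a vertex of $U$ has only finitely many neighbours in $H$. Continuous means $T_\ell=\bigcup_{i<\ell}T_i$ for limit $\ell$. *)

theory Defs
  imports Main "HOL-Library.Countable_Set"
begin

definition graph :: "'v set \<Rightarrow> ('v \<times> 'v) set \<Rightarrow> bool" where
  "graph V E \<longleftrightarrow> E \<subseteq> V \<times> V \<and> sym E \<and> irrefl E"

definition connected_in :: "('v \<times> 'v) set \<Rightarrow> 'v set \<Rightarrow> bool" where
  "connected_in E X \<longleftrightarrow> X \<noteq> {} \<and> (\<forall>u\<in>X. \<forall>v\<in>X. (u, v) \<in> (E \<inter> (X \<times> X))\<^sup>*)"

definition connected_graph :: "'v set \<Rightarrow> ('v \<times> 'v) set \<Rightarrow> bool" where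
  "connected_graph V E \<longleftrightarrow> graph V E \<and> connected_in E V"

definition countable_colouring_number :: "'v set \<Rightarrow> ('v \<times> 'v) set \<Rightarrow> bool" where
  "countable_colouring_number V E \<longleftrightarrow>
     (\<exists>r. well_order_on V r \<and> (\<forall>v\<in>V. finite {u\<in>V. (u, v) \<in> E \<and> (u, v) \<in> r}))"

text \<open>A minor of G=(V,E), represented with its branch sets as its vertices:
  the vertex set is a family of pairwise disjoint connected vertex sets of G and
  every edge of the minor joins two branch sets that are joined by an edge of G.\<close>
definition is_minor :: "'v set \<Rightarrow> ('v \<times> 'v) set \<Rightarrow> 'v set set \<Rightarrow> ('v set \<times> 'v set) set \<Rightarrow> bool" where
  "is_minor V E B EH \<longleftrightarrow>
     B \<subseteq> Pow V \<and> (\<forall>X\<in>B. \<forall>Y\<in>B. X \<noteq> Y \<longrightarrow> X \<inter> Y = {}) \<and>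
     (\<forall>X\<in>B. connected_in E X) \<and> graph B EH \<and>
     (\<forall>(X, Y)\<in>EH. \<exists>x\<in>X. \<exists>y\<in>Y. (x, y) \<in> E)"

definition rooted_minor :: "'v set \<Rightarrow> ('v \<times> 'v) set \<Rightarrow> 'v set \<Rightarrow> 'v set set \<Rightarrow> ('v set \<times> 'v set) set \<Rightarrow> bool" where
  "rooted_minor V E U B EH \<longleftrightarrow> is_minor V E B EH \<and> (\<forall>X\<in>B. X \<inter> U \<noteq> {})"

definition gpath :: "('v \<times> 'v) set \<Rightarrow> 'v list \<Rightarrow> bool" where
  "gpath E p \<longleftrightarrow> p \<noteq> [] \<and> distinct p \<and> (\<forall>i. Suc i < length p \<longrightarrow> (p ! i, p ! Suc i) \<in> E)"

definition component_of :: "('v \<times> 'v) set \<Rightarrow> 'v set \<Rightarrow> 'v set \<Rightarrow> bool" where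
  "component_of E X C \<longleftrightarrow> C \<subseteq> X \<and> connected_in E C \<and>
     (\<forall>D. C \<subseteq> D \<and> D \<subseteq> X \<and> connected_in E D \<longrightarrow> D = C)"

definition finite_adhesion :: "'v set \<Rightarrow> ('v \<times> 'v) set \<Rightarrow> 'v set \<Rightarrow> 'v set \<Rightarrow> bool" where
  "finite_adhesion V E H U \<longleftrightarrow>
     (\<forall>C. component_of E (V - H) C \<and> C \<inter> U \<noteq> {} \<longrightarrow> finite {h\<in>H. \<exists>c\<in>C. (c, h) \<in> E})"

definition down :: "('t \<times> 't) set \<Rightarrow> 't \<Rightarrow> 't set" where
  "down le t = {s. (s, t) \<in> le}"

definition sdown :: "('t \<times> 't) set \<Rightarrow> 't \<Rightarrow> 't set" where
  "sdown le t = {s. (s, t) \<in> le \<and> s \<noteq> t}"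

definition order_tree :: "'t set \<Rightarrow> ('t \<times> 't) set \<Rightarrow> bool" where
  "order_tree T le \<longleftrightarrow> le \<subseteq> T \<times> T \<and> partial_order_on T le \<and>
     (\<exists>!r. r \<in> T \<and> (\<forall>s\<in>T. (s, r) \<in> le \<longrightarrow> s = r)) \<and>
     (\<forall>t\<in>T. well_order_on (down le t) (le \<inter> (down le t \<times> down le t)))"

definition rooted_subtree :: "'t set \<Rightarrow> ('t \<times> 't) set \<Rightarrow> 't set \<Rightarrow> bool" where
  "rooted_subtree T le S \<longleftrightarrow> S \<subseteq> T \<and> (\<forall>t\<in>S. \<forall>s. (s, t) \<in> le \<longrightarrow> s \<in> S)"

definition T_graph :: "'t set \<Rightarrow> ('t \<times> 't) set \<Rightarrow> ('t \<times> 't) set \<Rightarrow> bool" where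
  "T_graph T le ET \<longleftrightarrow> graph T ET \<and> (\<forall>(s, t)\<in>ET. (s, t) \<in> le \<or> (t, s) \<in> le) \<and>
     (\<forall>t\<in>T. \<forall>s\<in>sdown le t. \<exists>u\<in>sdown le t. (u, t) \<in> ET \<and> (s, u) \<in> le)"

definition contraction :: "('v \<times> 'v) set \<Rightarrow> 't set \<Rightarrow> ('t \<Rightarrow> 'v set) \<Rightarrow> ('t \<times> 't) set" where
  "contraction E T Vt = {(s, t). s \<in> T \<and> t \<in> T \<and> s \<noteq> t \<and> (\<exists>x\<in>Vt s. \<exists>y\<in>Vt t. (x, y) \<in> E)}"

text \<open>Vertex set of G(S).\<close>
definition GS :: "('t \<Rightarrow> 'v set) \<Rightarrow> 't set \<Rightarrow> 'v set" where
  "GS Vt S = \<Union> (Vt ` S)"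

definition normal_semi_partition_tree ::
  "'v set \<Rightarrow> ('v \<times> 'v) set \<Rightarrow> 't set \<Rightarrow> ('t \<times> 't) set \<Rightarrow> ('t \<Rightarrow> 'v set) \<Rightarrow> bool" where
  "normal_semi_partition_tree V E T le Vt \<longleftrightarrow>
     order_tree T le \<and>
     (\<forall>t\<in>T. Vt t \<noteq> {} \<and> Vt t \<subseteq> V) \<and>
     (\<forall>s\<in>T. \<forall>t\<in>T. s \<noteq> t \<longrightarrow> Vt s \<inter> Vt t = {}) \<and>
     (\<forall>t\<in>T. connected_in E (Vt t)) \<and>
     T_graph T le (contraction E T Vt) \<and>
     (\<forall>p t t'. t \<in> T \<and> t' \<in> T \<and> gpath E p \<and> 2 \<le> length p \<and>
        hd p \<in> Vt t \<and> last p \<in> Vt t' \<and>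
        set (butlast (tl p)) \<inter> GS Vt T = {} \<and>
        (\<forall>i. Suc i < length p \<longrightarrow> \<not> (p ! i \<in> GS Vt T \<and> p ! Suc i \<in> GS Vt T))
        \<longrightarrow> (t, t') \<in> le \<or> (t', t) \<in> le)"

text \<open>Slim: |V_t| \<le> |height(t)| + aleph_0; the cardinality of height(t) is that of
  the strict down-closure of t.\<close>
definition slim :: "'t set \<Rightarrow> ('t \<times> 't) set \<Rightarrow> ('t \<Rightarrow> 'v set) \<Rightarrow> bool" where
  "slim T le Vt \<longleftrightarrow> (\<forall>t\<in>T. (card_of (Vt t), BNF_Cardinal_Arithmetic.csum (card_of (sdown le t)) natLeq) \<in> ordLeq)"

definition U_rooted_tree :: "'t set \<Rightarrow> ('t \<Rightarrow> 'v set) \<Rightarrow> 'v set \<Rightarrow> bool" where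
  "U_rooted_tree T Vt U \<longleftrightarrow> (\<forall>t\<in>T. Vt t \<inter> U \<noteq> {})"

definition cofinal_set :: "'a rel \<Rightarrow> 'a set \<Rightarrow> bool" where
  "cofinal_set r A \<longleftrightarrow> A \<subseteq> Field r \<and> (\<forall>a\<in>Field r. \<exists>b\<in>A. (a, b) \<in> r)"

text \<open>rI is (an isomorphic copy of) the initial ordinal cf(|T|): a cardinal order
  on I whose cardinality is the least cardinality of a cofinal subset of the
  initial ordinal |T|.\<close>
definition cf_index :: "'t set \<Rightarrow> 'i rel \<Rightarrow> 'i set \<Rightarrow> bool" where
  "cf_index T rI I \<longleftrightarrow> card_order_on I rI \<and>
     (\<exists>A. cofinal_set (card_of T) A \<and> (card_of I, card_of A) \<in> ordIso) \<and>
     (\<forall>A. cofinal_set (card_of T) A \<longrightarrow> (card_of I, card_of A) \<in> ordLeq)"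

definition is_limit :: "'i rel \<Rightarrow> 'i \<Rightarrow> bool" where
  "is_limit r i \<longleftrightarrow> i \<in> Field r \<and> (\<exists>j. (j, i) \<in> r \<and> j \<noteq> i) \<and>
     (\<forall>j. (j, i) \<in> r \<and> j \<noteq> i \<longrightarrow> (\<exists>k. (j, k) \<in> r \<and> j \<noteq> k \<and> (k, i) \<in> r \<and> k \<noteq> i))"

end

theory Submission
  imports Defs "HOL-Library.Countable_Set_Type"
begin

unbundle cardinal_syntax




locale setting =
  fixes V :: "'v set" and E :: "('v \<times> 'v) set" and U :: "'v set"
    and T :: "'t set" and le :: "('t \<times> 't) set" and Vt :: "'t \<Rightarrow> 'v set"
  assumes conn: "connected_graph V E"
    and UV: "U \<subseteq> V" and unc: "uncountable U"
    and minorH: "\<forall>B EH. rooted_minor V E U B EH \<and> (\<forall>X\<in>B. countable X)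
           \<longrightarrow> countable_colouring_number B EH"
    and nspt: "normal_semi_partition_tree V E T le Vt"
    and slimT: "slim T le Vt" and rootedT: "U_rooted_tree T Vt U"
    and UG: "U \<subseteq> GS Vt T"
begin

lemma E_sub: "E \<subseteq> V \<times> V" using conn unfolding connected_graph_def graph_def by auto
lemma E_sym: "(x,y) \<in> E \<Longrightarrow> (y,x) \<in> E" using conn unfolding connected_graph_def graph_def sym_def by auto
lemma E_irr: "(x,y) \<in> E \<Longrightarrow> x \<noteq> y" using conn unfolding connected_graph_def graph_def irrefl_def by auto

lemma otree: "order_tree T le" using nspt unfolding normal_semi_partition_tree_def by (elim conjE)
lemma le_sub: "le \<subseteq> T \<times> T" using otree unfolding order_tree_def by (elim conjE)
lemma le_po: "partial_order_on T le" using otree unfolding order_tree_def by (elim conjE)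
lemma le_T1: "(s,t) \<in> le \<Longrightarrow> s \<in> T" using le_sub by auto
lemma le_T2: "(s,t) \<in> le \<Longrightarrow> t \<in> T" using le_sub by auto
lemma le_refl: "t \<in> T \<Longrightarrow> (t,t) \<in> le" using le_po unfolding partial_order_on_def preorder_on_def refl_on_def by auto
lemma le_trans: assumes "(a,b) \<in> le" "(b,c) \<in> le" shows "(a,c) \<in> le"
proof -
  have "trans le" using le_po unfolding partial_order_on_def preorder_on_def by auto
  then show ?thesis using transD using assms by metis
qed
lemma le_antisym: "(a,b) \<in> le \<Longrightarrow> (b,a) \<in> le \<Longrightarrow> a = b"
  using le_po unfolding partial_order_on_def antisym_def by blast

lemma down_wo: "t \<in> T \<Longrightarrow> well_order_on (down le t) (le \<inter> (down le t \<times> down le t))"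
  using otree unfolding order_tree_def by (elim conjE) blast

lemma down_total: assumes "(a,t) \<in> le" "(b,t) \<in> le" shows "(a,b) \<in> le \<or> (b,a) \<in> le"
proof -
  have t: "t \<in> T" using assms le_T2 by auto
  have "total_on (down le t) (le \<inter> (down le t \<times> down le t))"
    using down_wo[OF t] unfolding well_order_on_def linear_order_on_def by auto
  moreover have "a \<in> down le t" "b \<in> down le t" using assms unfolding down_def by auto
  ultimately have "a = b \<or> (a,b) \<in> le \<or> (b,a) \<in> le" unfolding total_on_def by blast
  then show ?thesis using le_refl le_T1 assms(1) by metis
qed

lemma least_in_down:
  assumes "A \<subseteq> down le t" "A \<noteq> {}" "t \<in> T"
  shows "\<exists>m\<in>A. \<forall>a\<in>A. (m,a) \<in> le"
proof -
  let ?r = "le \<inter> (down le t \<times> down le t)"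
  have wf: "wf (?r - Id)" using down_wo[OF assms(3)] unfolding well_order_on_def by auto
  obtain m where m: "m \<in> A" "\<forall>y. (y,m) \<in> ?r - Id \<longrightarrow> y \<notin> A"
    using wfE_min'[OF wf assms(2)] by metis
  have "\<forall>a\<in>A. (m,a) \<in> le"
  proof
    fix a assume a: "a \<in> A"
    have "(m,t) \<in> le" "(a,t) \<in> le" using m a assms(1) unfolding down_def by auto
    then have "(m,a) \<in> le \<or> (a,m) \<in> le" using down_total by auto
    then show "(m,a) \<in> le"
    proof
      assume am: "(a,m) \<in> le"
      show ?thesis
      proof (cases "a = m")
        case True
        have "m \<in> T" using \<open>(m,t) \<in> le\<close> le_T1 by blast
        then show ?thesis using True le_refl by blast
      next
        case False
        have "(a,m) \<in> ?r - Id" using am False a m(1) assms(1) by blast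
        then show ?thesis using m(2) a by blast
      qed
    qed
  qed
  then show ?thesis using m by auto
qed

lemma minimal_exists:
  assumes "A \<subseteq> T" "A \<noteq> {}"
  shows "\<exists>m\<in>A. \<forall>a\<in>A. (a,m) \<in> le \<longrightarrow> a = m"
proof -
  obtain t where t: "t \<in> A" using assms by auto
  have tT: "t \<in> T" using t assms by auto
  have "A \<inter> down le t \<noteq> {}" using t le_refl[OF tT] unfolding down_def by auto
  then obtain m where m: "m \<in> A \<inter> down le t" "\<forall>a\<in>A \<inter> down le t. (m,a) \<in> le"
    using least_in_down[of "A \<inter> down le t" t] tT by blast
  have "\<forall>a\<in>A. (a,m) \<in> le \<longrightarrow> a = m"
  proof (intro ballI impI)
    fix a assume a: "a \<in> A" "(a,m) \<in> le"
    then have "a \<in> down le t" using m le_trans unfolding down_def by blast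
    then show "a = m" using m a le_antisym by blast
  qed
  then show ?thesis using m by blast
qed

lemma wf_lt: "wf (le - Id)"
  unfolding wf_eq_minimal
proof (intro allI impI)
  fix Q x assume x: "(x::'t) \<in> Q"
  show "\<exists>z\<in>Q. \<forall>y. (y, z) \<in> le - Id \<longrightarrow> y \<notin> Q"
  proof (cases "Q \<inter> T = {}")
    case True
    then show ?thesis using x le_T2 by blast
  next
    case False
    then obtain m where "m \<in> Q \<inter> T" "\<forall>a\<in>Q \<inter> T. (a,m) \<in> le \<longrightarrow> a = m"
      using minimal_exists[of "Q \<inter> T"] by blast
    then show ?thesis using le_T1 by blast
  qed
qed

lemma nspt_p1: "(\<forall>t\<in>T. Vt t \<noteq> {} \<and> Vt t \<subseteq> V)"
  using nspt unfolding normal_semi_partition_tree_def by (elim conjE)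
lemma nspt_p2: "(\<forall>s\<in>T. \<forall>t\<in>T. s \<noteq> t \<longrightarrow> Vt s \<inter> Vt t = {})"
  using nspt unfolding normal_semi_partition_tree_def by (elim conjE)
lemma nspt_p3: "(\<forall>t\<in>T. connected_in E (Vt t))"
  using nspt unfolding normal_semi_partition_tree_def by (elim conjE)
lemma nspt_p4: "T_graph T le (contraction E T Vt)"
  using nspt unfolding normal_semi_partition_tree_def by (elim conjE)
lemmas nspt_parts = nspt_p1 nspt_p2 nspt_p3 nspt_p4

lemma Vt_ne: "t \<in> T \<Longrightarrow> Vt t \<noteq> {}" using nspt_parts(1) by blast
lemma Vt_V: "t \<in> T \<Longrightarrow> Vt t \<subseteq> V" using nspt_parts(1) by blast
lemma Vt_disj: "s \<in> T \<Longrightarrow> t \<in> T \<Longrightarrow> s \<noteq> t \<Longrightarrow> Vt s \<inter> Vt t = {}"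
  using nspt_parts(2) by blast
lemma Vt_conn: "t \<in> T \<Longrightarrow> connected_in E (Vt t)"
  using nspt_parts(3) by blast
lemma Vt_inj: "s \<in> T \<Longrightarrow> t \<in> T \<Longrightarrow> Vt s = Vt t \<Longrightarrow> s = t"
  using Vt_disj Vt_ne by blast
lemma Vt_same: "s \<in> T \<Longrightarrow> t \<in> T \<Longrightarrow> x \<in> Vt s \<Longrightarrow> x \<in> Vt t \<Longrightarrow> s = t"
  using Vt_disj by blast

lemma Tg: "T_graph T le (contraction E T Vt)"
  using nspt_parts(4) .

lemma ce_iff: "(s,t) \<in> contraction E T Vt \<longleftrightarrow> s \<in> T \<and> t \<in> T \<and> s \<noteq> t \<and> (\<exists>x\<in>Vt s. \<exists>y\<in>Vt t. (x, y) \<in> E)"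
  unfolding contraction_def by auto

lemma ce_sym: "(s,t) \<in> contraction E T Vt \<Longrightarrow> (t,s) \<in> contraction E T Vt"
  unfolding ce_iff using E_sym by blast

lemma ce_comp: "(s,t) \<in> contraction E T Vt \<Longrightarrow> (s,t) \<in> le \<or> (t,s) \<in> le"
  using Tg unfolding T_graph_def by auto

lemma ce_cof: "t \<in> T \<Longrightarrow> s \<in> sdown le t \<Longrightarrow> \<exists>u\<in>sdown le t. (u, t) \<in> contraction E T Vt \<and> (s, u) \<in> le"
  using Tg unfolding T_graph_def by auto

lemma normal:
  assumes "t \<in> T" "t' \<in> T" "gpath E p" "2 \<le> length p" "hd p \<in> Vt t" "last p \<in> Vt t'"
    "set (butlast (tl p)) \<inter> GS Vt T = {}"
    "\<forall>i. Suc i < length p \<longrightarrow> \<not> (p ! i \<in> GS Vt T \<and> p ! Suc i \<in> GS Vt T)"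
  shows "(t, t') \<in> le \<or> (t', t) \<in> le"
proof -
  have H: "\<forall>p t t'. t \<in> T \<and> t' \<in> T \<and> gpath E p \<and> 2 \<le> length p \<and>
        hd p \<in> Vt t \<and> last p \<in> Vt t' \<and>
        set (butlast (tl p)) \<inter> GS Vt T = {} \<and>
        (\<forall>i. Suc i < length p \<longrightarrow> \<not> (p ! i \<in> GS Vt T \<and> p ! Suc i \<in> GS Vt T))
        \<longrightarrow> (t, t') \<in> le \<or> (t', t) \<in> le"
    using nspt unfolding normal_semi_partition_tree_def by (elim conjE)
  show ?thesis using H[rule_format, of t t' p] assms by blast
qed

lemma GS_iff: "x \<in> GS Vt S \<longleftrightarrow> (\<exists>s\<in>S. x \<in> Vt s)" unfolding GS_def by auto

lemma sdown_iff: "s \<in> sdown le t \<longleftrightarrow> (s,t) \<in> le \<and> s \<noteq> t" unfolding sdown_def by auto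
lemma down_iff: "s \<in> down le t \<longleftrightarrow> (s,t) \<in> le" unfolding down_def by auto

lemma root_exists: "\<exists>r\<in>T. \<forall>t\<in>T. (r,t) \<in> le"
proof -
  obtain r where r: "r \<in> T" "\<forall>s\<in>T. (s, r) \<in> le \<longrightarrow> s = r"
    and uniq: "\<And>r'. r' \<in> T \<Longrightarrow> (\<forall>s\<in>T. (s, r') \<in> le \<longrightarrow> s = r') \<Longrightarrow> r' = r"
    using otree unfolding order_tree_def Ex1_def by (elim conjE exE) blast
  have "\<forall>t\<in>T. (r,t) \<in> le"
  proof
    fix t assume t: "t \<in> T"
    have "down le t \<noteq> {}" using le_refl[OF t] unfolding down_def by auto
    then obtain m where m: "m \<in> down le t" "\<forall>a\<in>down le t. (m,a) \<in> le"
      using least_in_down[of "down le t" t] t by blast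
    have mT: "m \<in> T" using m le_T1 unfolding down_def by auto
    have "\<forall>s\<in>T. (s, m) \<in> le \<longrightarrow> s = m"
    proof (intro ballI impI)
      fix s assume "s \<in> T" "(s,m) \<in> le"
      then have "s \<in> down le t" using m le_trans unfolding down_def by blast
      then show "s = m" using m \<open>(s,m) \<in> le\<close> le_antisym by blast
    qed
    then have "m = r" using uniq mT by blast
    then show "(r,t) \<in> le" using m unfolding down_def by auto
  qed
  then show ?thesis using r by blast
qed

end



context setting begin

abbreviation reach :: "'v set \<Rightarrow> 'v \<Rightarrow> 'v \<Rightarrow> bool" where
  "reach Z x y \<equiv> (x,y) \<in> (E \<inter> (Z \<times> Z))\<^sup>*"

lemma reach_mono: "reach Z x y \<Longrightarrow> Z \<subseteq> Z' \<Longrightarrow> reach Z' x y"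
  by (meson Int_mono Sigma_mono order_refl rtrancl_mono subsetD)

lemma reach_sym: "reach Z x y \<Longrightarrow> reach Z y x"
proof -
  have "sym (E \<inter> (Z \<times> Z))" unfolding sym_def using E_sym by blast
  then have "sym ((E \<inter> (Z \<times> Z))\<^sup>*)" by (rule sym_rtrancl)
  then show "reach Z x y \<Longrightarrow> reach Z y x" unfolding sym_def by blast
qed

lemma reach_trans: "reach Z x y \<Longrightarrow> reach Z y w \<Longrightarrow> reach Z x w" by auto

lemma reach_in: "reach Z x y \<Longrightarrow> x \<noteq> y \<Longrightarrow> x \<in> Z \<and> y \<in> Z"
  by (erule converse_rtranclE) (auto elim: rtranclE)

lemma reach_in2: "reach Z x y \<Longrightarrow> x \<in> Z \<Longrightarrow> y \<in> Z"
  using reach_in by blast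

lemma reach_edge: "(x,y) \<in> E \<Longrightarrow> x \<in> Z \<Longrightarrow> y \<in> Z \<Longrightarrow> reach Z x y" by auto

lemma conn_def2: "connected_in E X \<longleftrightarrow> X \<noteq> {} \<and> (\<forall>u\<in>X. \<forall>v\<in>X. reach X u v)"
  unfolding connected_in_def by auto

lemma conn_Un:
  assumes "connected_in E X" "connected_in E Y" "X \<inter> Y \<noteq> {}"
  shows "connected_in E (X \<union> Y)"
  unfolding conn_def2
proof (intro conjI ballI)
  show "X \<union> Y \<noteq> {}" using assms(1) unfolding conn_def2 by auto
  obtain w where w: "w \<in> X" "w \<in> Y" using assms(3) by auto
  have rX: "reach (X \<union> Y) u w" if "u \<in> X" for u
  proof -
    have "reach X u w" using assms(1) that w unfolding conn_def2 by auto
    then show ?thesis by (rule reach_mono) auto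
  qed
  have rY: "reach (X \<union> Y) u w" if "u \<in> Y" for u
  proof -
    have "reach Y u w" using assms(2) that w unfolding conn_def2 by auto
    then show ?thesis by (rule reach_mono) auto
  qed
  fix u v assume "u \<in> X \<union> Y" "v \<in> X \<union> Y"
  then have "reach (X \<union> Y) u w" "reach (X \<union> Y) v w" using rX rY by auto
  then show "reach (X \<union> Y) u v" using reach_sym reach_trans by blast
qed

lemma conn_Un_edge:
  assumes "connected_in E X" "connected_in E Y" "x \<in> X" "y \<in> Y" "(x,y) \<in> E"
  shows "connected_in E (X \<union> Y)"
proof -
  have "connected_in E {x,y}" unfolding conn_def2
    using assms(5) E_sym by (auto intro!: reach_edge)
  then have "connected_in E (X \<union> {x,y})" using conn_Un[of X "{x,y}"] assms(1,3) by blast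
  then have "connected_in E ((X \<union> {x,y}) \<union> Y)" using conn_Un[of "X \<union> {x,y}" Y] assms(2,4) by blast
  moreover have "(X \<union> {x,y}) \<union> Y = X \<union> Y" using assms(3,4) by auto
  ultimately show ?thesis by simp
qed

lemma conn_insert_edge:
  assumes "connected_in E X" "x \<in> X" "(y,x) \<in> E"
  shows "connected_in E (insert y X)"
proof -
  have "connected_in E {y}" unfolding conn_def2 by auto
  then have "connected_in E ({y} \<union> X)" using conn_Un_edge[of "{y}" X y x] assms by auto
  then show ?thesis by simp
qed

definition rclass :: "'v set \<Rightarrow> 'v \<Rightarrow> 'v set" where
  "rclass Z c = {x. reach Z c x}"

lemma reach_rclass: "reach Z c x \<Longrightarrow> reach (rclass Z c) c x"
proof (induction rule: rtrancl_induct)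
  case base then show ?case by simp
next
  case (step y z)
  have cz: "reach Z c z" using step(1,2) by (meson rtrancl.rtrancl_into_rtrancl)
  have "y \<in> rclass Z c" "z \<in> rclass Z c" using step(1) cz unfolding rclass_def by auto
  then have "(y,z) \<in> E \<inter> (rclass Z c \<times> rclass Z c)" using step by auto
  then show ?case using step by (meson rtrancl.rtrancl_into_rtrancl)
qed

lemma rclass_conn: "connected_in E (rclass Z c)"
  unfolding conn_def2
proof (intro conjI ballI)
  show "rclass Z c \<noteq> {}" unfolding rclass_def by auto
  fix u v assume "u \<in> rclass Z c" "v \<in> rclass Z c"
  then have "reach (rclass Z c) c u" "reach (rclass Z c) c v" using reach_rclass unfolding rclass_def by auto
  then show "reach (rclass Z c) u v" using reach_sym reach_trans by blast
qed

lemma rclass_sub: "c \<in> Z \<Longrightarrow> rclass Z c \<subseteq> Z"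
  unfolding rclass_def using reach_in2 by blast

lemma comp_max:
  assumes "component_of E Z C" "connected_in E D" "D \<subseteq> Z" "D \<inter> C \<noteq> {}"
  shows "D \<subseteq> C"
proof -
  have cC: "connected_in E C" "C \<subseteq> Z" using assms(1) unfolding component_of_def by auto
  have "connected_in E (C \<union> D)" using conn_Un[OF cC(1) assms(2)] assms(4) by auto
  then have "C \<union> D = C" using assms(1,3) cC(2) unfolding component_of_def by blast
  then show ?thesis by auto
qed

lemma comp_reach:
  assumes "component_of E Z C" "c \<in> C" "reach Z c x"
  shows "x \<in> C"
proof -
  have cZ: "c \<in> Z" using assms(1,2) unfolding component_of_def by auto
  have "rclass Z c \<subseteq> C"
    using comp_max[OF assms(1) rclass_conn rclass_sub[OF cZ]] assms(2) unfolding rclass_def by auto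
  then show ?thesis using assms(3) unfolding rclass_def by auto
qed

lemma conn_reach: "connected_in E X \<Longrightarrow> u \<in> X \<Longrightarrow> v \<in> X \<Longrightarrow> reach X u v"
  unfolding conn_def2 by auto

end



lemma snoc_conds:
  assumes "2 \<le> length p" "set (tl p) \<inter> X = {}"
  shows "set (butlast (tl (p @ [w]))) \<inter> X = {}"
    and "\<forall>i. Suc i < length (p @ [w]) \<longrightarrow> \<not> ((p @ [w]) ! i \<in> X \<and> (p @ [w]) ! Suc i \<in> X)"
proof -
  have pne: "p \<noteq> []" using assms(1) by auto
  have "butlast (tl (p @ [w])) = tl p" using pne by (cases p) auto
  then show "set (butlast (tl (p @ [w]))) \<inter> X = {}" using assms(2) by simp
  show "\<forall>i. Suc i < length (p @ [w]) \<longrightarrow> \<not> ((p @ [w]) ! i \<in> X \<and> (p @ [w]) ! Suc i \<in> X)"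
  proof (intro allI impI)
    fix i assume i: "Suc i < length (p @ [w])"
    show "\<not> ((p @ [w]) ! i \<in> X \<and> (p @ [w]) ! Suc i \<in> X)"
    proof (cases "Suc i < length p")
      case True
      have "(p @ [w]) ! Suc i = p ! Suc i" using True by (simp add: nth_append)
      also have "\<dots> = tl p ! i" using pne True by (cases p) auto
      finally have "(p @ [w]) ! Suc i \<in> set (tl p)" using True pne by (cases p) auto
      then show ?thesis using assms(2) by auto
    next
      case False
      then have si: "Suc i = length p" using i by auto
      then have "(p @ [w]) ! i = p ! i" by (simp add: nth_append)
      moreover have "i \<ge> 1" using si assms(1) by auto
      moreover have "p ! i = tl p ! (i - 1)" using pne \<open>i \<ge> 1\<close> by (cases p) auto
      moreover have "i - 1 < length (tl p)" using si \<open>i \<ge> 1\<close> by auto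
      ultimately have "(p @ [w]) ! i \<in> set (tl p)" by (metis nth_mem)
      then show ?thesis using assms(2) by auto
    qed
  qed
qed

lemma gpath_snoc:
  assumes "gpath E p" "w \<notin> set p" "(last p, w) \<in> E"
  shows "gpath E (p @ [w])"
  unfolding gpath_def
proof (intro conjI allI impI)
  show "p @ [w] \<noteq> []" by simp
  show "distinct (p @ [w])" using assms unfolding gpath_def by auto
  fix i assume i: "Suc i < length (p @ [w])"
  have pne: "p \<noteq> []" using assms(1) unfolding gpath_def by auto
  show "((p @ [w]) ! i, (p @ [w]) ! Suc i) \<in> E"
  proof (cases "Suc i < length p")
    case True
    then show ?thesis using assms(1) unfolding gpath_def by (simp add: nth_append)
  next
    case False
    then have si: "Suc i = length p" using i by auto
    then have "i = length p - 1" by auto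
    then have "(p @ [w]) ! i = last p" using pne by (simp add: nth_append last_conv_nth)
    moreover have "(p @ [w]) ! Suc i = w" using si by (simp add: nth_append)
    ultimately show ?thesis using assms(3) by simp
  qed
qed

lemma gpath_take:
  assumes "gpath E p" "0 < n"
  shows "gpath E (take n p)"
  using assms unfolding gpath_def by auto

context setting begin

lemma cmp_step:
  assumes "(t,a) \<in> le" "(a,b) \<in> le \<or> (b,a) \<in> le" "b \<in> T" "b \<notin> sdown le t"
  shows "(t,b) \<in> le"
  using assms(2)
proof
  assume "(a,b) \<in> le" then show ?thesis using assms(1) le_trans by blast
next
  assume ba: "(b,a) \<in> le"
  then have "(b,t) \<in> le \<or> (t,b) \<in> le" using down_total assms(1) by blast
  then show ?thesis
  proof
    assume "(b,t) \<in> le"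
    then have "b = t" using assms(4) unfolding sdown_def by auto
    then show ?thesis using le_refl assms(3) by auto
  qed
qed

definition Inv :: "'t \<Rightarrow> 'v set \<Rightarrow> 'v \<Rightarrow> bool" where
  "Inv t Z z \<longleftrightarrow> (\<forall>a\<in>T. z \<in> Vt a \<longrightarrow> (t,a) \<in> le) \<and>
     (z \<notin> GS Vt T \<longrightarrow> (\<exists>a p. a \<in> T \<and> (t,a) \<in> le \<and> gpath E p \<and> 2 \<le> length p \<and> hd p \<in> Vt a \<and>
        last p = z \<and> set (tl p) \<inter> GS Vt T = {} \<and> set p \<subseteq> Z))"

lemma path_link:
  assumes "a \<in> T" "gpath E p" "2 \<le> length p" "hd p \<in> Vt a" "set (tl p) \<inter> GS Vt T = {}"
    "(last p, w) \<in> E" "w \<in> Vt b" "b \<in> T" "w \<notin> set p \<or> a = b"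
  shows "(a,b) \<in> le \<or> (b,a) \<in> le"
proof (cases "a = b")
  case True then show ?thesis using le_refl assms(1) by auto
next
  case False
  then have wp: "w \<notin> set p" using assms(9) by auto
  have g: "gpath E (p @ [w])" using gpath_snoc[OF assms(2) wp assms(6)] .
  have h: "hd (p @ [w]) \<in> Vt a" using assms(3,4) by (cases p) auto
  have l: "last (p @ [w]) \<in> Vt b" using assms(7) by simp
  have l2: "2 \<le> length (p @ [w])" using assms(3) by simp
  show ?thesis
    using normal[OF assms(1) assms(8) g l2 h l snoc_conds[OF assms(3) assms(5)]] .
qed

lemma key:
  assumes t: "t \<in> T" and Z: "Z \<inter> GS Vt (sdown le t) = {}" and v0: "v0 \<in> Vt t"
    and r: "reach Z v0 z"
  shows "Inv t Z z"
  using r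
proof (induction rule: rtrancl_induct)
  case base
  show ?case unfolding Inv_def
  proof (intro conjI ballI impI)
    fix a assume "a \<in> T" "v0 \<in> Vt a"
    then have "a = t" using Vt_same t v0 by blast
    then show "(t,a) \<in> le" using le_refl t by auto
  next
    assume "v0 \<notin> GS Vt T" then show "\<exists>a p. a \<in> T \<and> (t,a) \<in> le \<and> gpath E p \<and> 2 \<le> length p \<and> hd p \<in> Vt a \<and>
        last p = v0 \<and> set (tl p) \<inter> GS Vt T = {} \<and> set p \<subseteq> Z" using v0 t unfolding GS_iff by auto
  qed
next
  case (step y z)
  have yz: "(y,z) \<in> E" "y \<in> Z" "z \<in> Z" using step(2) by auto
  have IH: "Inv t Z y" using step(3) .
  have partA: "(t,b) \<in> le" if b: "b \<in> T" "z \<in> Vt b" for b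
  proof -
    have bns: "b \<notin> sdown le t"
    proof
      assume "b \<in> sdown le t"
      then have "z \<in> GS Vt (sdown le t)" using b(2) unfolding GS_iff by blast
      then show False using Z yz(3) by blast
    qed
    show ?thesis
    proof (cases "y \<in> GS Vt T")
      case True
      then obtain a where a: "a \<in> T" "y \<in> Vt a" unfolding GS_iff by auto
      have ta: "(t,a) \<in> le" using IH a unfolding Inv_def by auto
      have "(a,b) \<in> le \<or> (b,a) \<in> le"
      proof (cases "a = b")
        case True then show ?thesis using le_refl a by auto
      next
        case False
        then have "(a,b) \<in> contraction E T Vt" unfolding ce_iff using a b yz(1) by blast
        then show ?thesis using ce_comp by blast
      qed
      then show ?thesis by (rule cmp_step[OF ta _ b(1) bns])
    next
      case False
      then obtain a p where ap: "a \<in> T" "(t,a) \<in> le" "gpath E p" "2 \<le> length p" "hd p \<in> Vt a"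
        "last p = y" "set (tl p) \<inter> GS Vt T = {}" "set p \<subseteq> Z"
        using IH unfolding Inv_def by blast
      have "z \<notin> set p \<or> a = b"
      proof (cases "z \<in> set p")
        case True
        have pne: "p \<noteq> []" using ap(4) by auto
        have "z \<in> GS Vt T" using b unfolding GS_iff by auto
        then have "z \<notin> set (tl p)" using ap(7) by auto
        then have "z = hd p" using True pne by (cases p) (auto split: if_splits)
        then have "a = b" using Vt_same ap(1,5) b by blast
        then show ?thesis by auto
      qed auto
      moreover have "(last p, z) \<in> E" using ap(6) yz(1) by simp
      ultimately have "(a,b) \<in> le \<or> (b,a) \<in> le"
        using path_link[OF ap(1) ap(3) ap(4) ap(5) ap(7) _ b(2) b(1)] by blast
      then show ?thesis by (rule cmp_step[OF ap(2) _ b(1) bns])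
    qed
  qed
  have partB: "\<exists>a p. a \<in> T \<and> (t,a) \<in> le \<and> gpath E p \<and> 2 \<le> length p \<and> hd p \<in> Vt a \<and>
        last p = z \<and> set (tl p) \<inter> GS Vt T = {} \<and> set p \<subseteq> Z" if zn: "z \<notin> GS Vt T"
  proof (cases "y \<in> GS Vt T")
    case True
    then obtain a where a: "a \<in> T" "y \<in> Vt a" unfolding GS_iff by auto
    have ta: "(t,a) \<in> le" using IH a unfolding Inv_def by auto
    have "y \<noteq> z" using E_irr yz by auto
    then have "gpath E [y,z]" unfolding gpath_def using yz(1) by (auto simp: less_Suc_eq)
    moreover have "set (tl [y,z]) \<inter> GS Vt T = {}" using zn by simp
    moreover have "set [y,z] \<subseteq> Z" using yz by simp
    moreover have "hd [y,z] \<in> Vt a" using a by simp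
    ultimately show ?thesis using a(1) ta by (intro exI[of _ a] exI[of _ "[y,z]"]) simp
  next
    case False
    then obtain a p where ap: "a \<in> T" "(t,a) \<in> le" "gpath E p" "2 \<le> length p" "hd p \<in> Vt a"
      "last p = y" "set (tl p) \<inter> GS Vt T = {}" "set p \<subseteq> Z"
      using IH unfolding Inv_def by blast
    have pne: "p \<noteq> []" using ap(4) by auto
    show ?thesis
    proof (cases "z \<in> set p")
      case False
      have g: "gpath E (p @ [z])" using gpath_snoc[OF ap(3) False] ap(6) yz(1) by auto
      have "hd (p @ [z]) = hd p" using pne by (cases p) auto
      moreover have "set (tl (p @ [z])) = set (tl p) \<union> {z}" using pne by (cases p) auto
      moreover have "set (p @ [z]) \<subseteq> Z" using ap(8) yz(3) by simp
      moreover have "2 \<le> length (p @ [z])" using ap(4) by simp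
      ultimately show ?thesis using ap(1,2,5,7) g zn
        by (intro exI[of _ a] exI[of _ "p @ [z]"]) simp
    next
      case True
      then obtain k where k: "k < length p" "p ! k = z" by (meson in_set_conv_nth)
      have "hd p \<in> GS Vt T" using ap(1,5) unfolding GS_iff by auto
      then have k0: "k \<noteq> 0" using k zn pne by (metis hd_conv_nth)
      let ?q = "take (Suc k) p"
      have g: "gpath E ?q" using gpath_take[OF ap(3)] by auto
      have l: "2 \<le> length ?q" using k k0 by auto
      have h: "hd ?q = hd p" using pne by (cases p) auto
      have la: "last ?q = z" using k by (simp add: take_Suc_conv_app_nth) 
      have st: "set (tl ?q) \<subseteq> set (tl p)" unfolding tl_take by (rule set_take_subset)
      have sp: "set ?q \<subseteq> set p" by (rule set_take_subset)
      have "set (tl ?q) \<inter> GS Vt T = {}" using st ap(7) by blast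
      moreover have "set ?q \<subseteq> Z" using sp ap(8) by blast
      moreover have "hd ?q \<in> Vt a" using h ap(5) by simp
      ultimately show ?thesis using ap(1,2) g l la by (intro exI[of _ a] exI[of _ ?q]) simp
    qed
  qed
  show ?case unfolding Inv_def using partA partB by blast
qed

end



lemma ccn_count:
  assumes wo: "well_order_on B r" and fin: "\<forall>v\<in>B. finite {u\<in>B. (u, v) \<in> EH \<and> (u, v) \<in> r}"
    and sym: "\<And>x y. (x,y) \<in> EH \<Longrightarrow> (y,x) \<in> EH" and irr: "\<And>x y. (x,y) \<in> EH \<Longrightarrow> x \<noteq> y"
    and X: "X \<subseteq> B" "countable X" and Y: "Y \<subseteq> B"
    and inf: "\<forall>y\<in>Y. infinite {x\<in>X. (x,y) \<in> EH}"
  shows "countable Y"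
proof -
  let ?F = "\<lambda>x. {u\<in>B. (u, x) \<in> EH \<and> (u, x) \<in> r}"
  have tot: "total_on B r" using wo unfolding well_order_on_def linear_order_on_def by auto
  have "Y \<subseteq> (\<Union>x\<in>X. ?F x)"
  proof
    fix y assume y: "y \<in> Y"
    have "finite (?F y)" using fin y Y by auto
    moreover have "infinite {x\<in>X. (x,y) \<in> EH}" using inf y by auto
    ultimately have "\<not> {x\<in>X. (x,y) \<in> EH} \<subseteq> ?F y" using finite_subset by blast
    then obtain x where x: "x \<in> {x\<in>X. (x,y) \<in> EH}" "x \<notin> ?F y" by blast
    have xy: "x \<noteq> y" using irr x by auto
    have "(x,y) \<notin> r" using x X by auto
    then have "(y,x) \<in> r" using tot xy x X y Y unfolding total_on_def by blast
    then have "y \<in> ?F x" using sym x y Y by auto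
    then show "y \<in> (\<Union>x\<in>X. ?F x)" using x by auto
  qed
  moreover have "countable (\<Union>x\<in>X. ?F x)"
    using X(2) fin X(1) by (intro countable_UN) (auto intro: countable_finite)
  ultimately show ?thesis by (rule countable_subset)
qed

lemma inj_choice:
  assumes "countable W1" "\<forall>w\<in>W1. uncountable (A w)"
  shows "\<exists>g. inj_on g W1 \<and> (\<forall>w\<in>W1. g w \<in> A w)"
proof -
  obtain e :: "_ \<Rightarrow> nat" where e: "inj_on e W1" using assms(1) unfolding countable_def by auto
  define L where "L = rec_nat [] (\<lambda>n l. l @ [SOME x. x \<in> A (inv_into W1 e n) \<and> x \<notin> set l])"
  have L0: "L 0 = []" unfolding L_def by simp
  have LS: "L (Suc n) = L n @ [SOME x. x \<in> A (inv_into W1 e n) \<and> x \<notin> set (L n)]" for n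
    unfolding L_def by simp
  have len: "length (L n) = n" for n by (induction n) (auto simp: L0 LS)
  have pre: "L (n + k) ! i = L n ! i" if "i < n" for n k i
    using that by (induction k) (auto simp: LS nth_append len)
  have good: "L (Suc n) ! n \<in> A (inv_into W1 e n) \<and> L (Suc n) ! n \<notin> set (L n)" if "n \<in> e ` W1" for n
  proof -
    have "inv_into W1 e n \<in> W1" using that by (simp add: inv_into_into)
    then have "uncountable (A (inv_into W1 e n))" using assms(2) by auto
    then have "infinite (A (inv_into W1 e n))" using countable_finite by blast
    then have "\<not> A (inv_into W1 e n) \<subseteq> set (L n)" using finite_subset by blast
    then have "\<exists>x. x \<in> A (inv_into W1 e n) \<and> x \<notin> set (L n)" by blast
    then have "(SOME x. x \<in> A (inv_into W1 e n) \<and> x \<notin> set (L n)) \<in> A (inv_into W1 e n) \<and>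
       (SOME x. x \<in> A (inv_into W1 e n) \<and> x \<notin> set (L n)) \<notin> set (L n)" by (rule someI_ex)
    then show ?thesis by (simp add: LS nth_append len)
  qed
  define g where "g w = L (Suc (e w)) ! (e w)" for w
  have "inj_on g W1"
  proof (rule inj_onI)
    fix w w' assume w: "w \<in> W1" "w' \<in> W1" "g w = g w'"
    show "w = w'"
    proof (rule ccontr)
      assume "w \<noteq> w'"
      then have ne: "e w \<noteq> e w'" using e w by (meson inj_onD)
      have *: False if "a \<in> W1" "b \<in> W1" "e a < e b" "g a = g b" for a b
      proof -
        have "L (e b) ! (e a) = L (Suc (e a)) ! (e a)"
          using pre[of "e a" "Suc (e a)" "e b - Suc (e a)"] that(3) by simp
        moreover have "e a < length (L (e b))" using that(3) len by simp
        ultimately have "g a \<in> set (L (e b))" unfolding g_def using nth_mem by metis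
        moreover have "g b \<notin> set (L (e b))" using good[of "e b"] that(2) unfolding g_def by auto
        ultimately show False using that(4) by simp
      qed
      show False
      proof (cases "e w < e w'")
        case True then show False using * w by blast
      next
        case False then have "e w' < e w" using ne by simp
        then show False using * w by metis
      qed
    qed
  qed
  moreover have "\<forall>w\<in>W1. g w \<in> A w"
  proof
    fix w assume "w \<in> W1"
    then have "inv_into W1 e (e w) = w" using e by simp
    then show "g w \<in> A w" using good[of "e w"] \<open>w \<in> W1\<close> unfolding g_def by auto
  qed
  ultimately show ?thesis by blast
qed

context setting begin

lemma path_set:
  assumes "reach D u d" "u \<in> D"
  shows "\<exists>P. finite P \<and> P \<subseteq> D \<and> u \<in> P \<and> d \<in> P \<and> connected_in E P"
  using assms(1)
proof (induction rule: rtrancl_induct)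
  case base
  have "connected_in E {u}" unfolding conn_def2 by auto
  then show ?case using assms(2) by (intro exI[of _ "{u}"]) auto
next
  case (step x y)
  then obtain P where P: "finite P" "P \<subseteq> D" "u \<in> P" "x \<in> P" "connected_in E P" by blast
  have xy: "(x,y) \<in> E" "y \<in> D" using step(2) by auto
  have "(y,x) \<in> E" using E_sym xy(1) .
  then have "connected_in E (insert y P)" using conn_insert_edge[OF P(5) P(4)] by blast
  then show ?case using P xy by (intro exI[of _ "insert y P"]) auto
qed

lemma Y_lemma:
  assumes D: "connected_in E D" and u: "u \<in> D" and W: "countable W"
    and inf: "infinite {w\<in>W. \<exists>d\<in>D. (d,w) \<in> E}"
  shows "\<exists>Y. Y \<subseteq> D \<and> countable Y \<and> connected_in E Y \<and> u \<in> Y \<and> infinite {w\<in>W. \<exists>y\<in>Y. (y,w) \<in> E}"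
proof -
  let ?N = "{w\<in>W. \<exists>d\<in>D. (d,w) \<in> E}"
  have ex: "\<exists>P. finite P \<and> P \<subseteq> D \<and> u \<in> P \<and> (\<exists>d\<in>P. (d,w) \<in> E) \<and> connected_in E P" if wN: "w \<in> ?N" for w
  proof -
    obtain d where d: "d \<in> D" "(d,w) \<in> E" using wN by auto
    have "reach D u d" using conn_reach[OF D u d(1)] .
    then obtain P where P: "finite P" "P \<subseteq> D" "u \<in> P" "d \<in> P" "connected_in E P"
      using path_set[OF _ u] by blast
    show ?thesis using P d(2) by (intro exI[of _ P]) blast
  qed
  define P where "P w = (SOME P. finite P \<and> P \<subseteq> D \<and> u \<in> P \<and> (\<exists>d\<in>P. (d,w) \<in> E) \<and> connected_in E P)" for w
  have P: "finite (P w) \<and> P w \<subseteq> D \<and> u \<in> P w \<and> (\<exists>d\<in>P w. (d,w) \<in> E) \<and> connected_in E (P w)" if "w \<in> ?N" for w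
    unfolding P_def using someI_ex[OF ex[OF that]] .
  define Y where "Y = insert u (\<Union>w\<in>?N. P w)"
  have "Y \<subseteq> D"
  proof -
    have "P w \<subseteq> D" if "w \<in> ?N" for w using P[OF that] by blast
    then show ?thesis unfolding Y_def using u by blast
  qed
  moreover have "countable Y"
  proof -
    have "countable ?N" using W by (rule countable_subset[rotated]) auto
    moreover have "\<forall>w\<in>?N. countable (P w)" using P countable_finite by blast
    ultimately have "countable (\<Union>w\<in>?N. P w)" by (intro countable_UN) auto
    then show ?thesis unfolding Y_def by simp
  qed
  moreover have "connected_in E Y" unfolding conn_def2
  proof (intro conjI ballI)
    show "Y \<noteq> {}" unfolding Y_def by auto
    have toU: "reach Y x u" if xY: "x \<in> Y" for x
    proof (cases "x = u")
      case True then show ?thesis by simp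
    next
      case False
      then obtain w where w: "w \<in> ?N" "x \<in> P w" using xY unfolding Y_def by auto
      have Pw: "connected_in E (P w)" "u \<in> P w" using P[OF w(1)] by auto
      have "reach (P w) x u" using conn_reach[OF Pw(1) w(2) Pw(2)] .
      moreover have "P w \<subseteq> Y" unfolding Y_def using w by auto
      ultimately show ?thesis by (rule reach_mono)
    qed
    fix x y assume xy: "x \<in> Y" "y \<in> Y"
    have "reach Y x u" using toU[OF xy(1)] .
    moreover have "reach Y u y" using reach_sym[OF toU[OF xy(2)]] .
    ultimately show "reach Y x y" by (rule reach_trans)
  qed
  moreover have "u \<in> Y" unfolding Y_def by auto
  moreover have "?N \<subseteq> {w\<in>W. \<exists>y\<in>Y. (y,w) \<in> E}"
  proof
    fix w assume w: "w \<in> ?N"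
    then obtain d where "d \<in> P w" "(d,w) \<in> E" using P[OF w] by blast
    then show "w \<in> {w\<in>W. \<exists>y\<in>Y. (y,w) \<in> E}" using w unfolding Y_def by auto
  qed
  then have "infinite {w\<in>W. \<exists>y\<in>Y. (y,w) \<in> E}" using inf infinite_super by blast
  ultimately show ?thesis by blast
qed

end



context setting begin

lemma count_family:
  assumes WV: "W \<subseteq> V" and Wc: "countable W"
    and DK: "\<And>t. t \<in> K \<Longrightarrow> D t \<subseteq> V - W \<and> connected_in E (D t) \<and> D t \<inter> U \<noteq> {} \<and>
                 infinite {w\<in>W. \<exists>d\<in>D t. (d,w) \<in> E}"
    and disj: "\<And>t t'. t \<in> K \<Longrightarrow> t' \<in> K \<Longrightarrow> t \<noteq> t' \<Longrightarrow> D t \<inter> D t' = {}"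
  shows "countable K"
proof (rule ccontr)
  assume Kunc: "uncountable K"
  have exY: "\<exists>Y. Y \<subseteq> D t \<and> countable Y \<and> connected_in E Y \<and> Y \<inter> U \<noteq> {} \<and> infinite {w\<in>W. \<exists>y\<in>Y. (y,w) \<in> E}"
    if tK: "t \<in> K" for t
  proof -
    have d: "D t \<subseteq> V - W" "connected_in E (D t)" "D t \<inter> U \<noteq> {}" "infinite {w\<in>W. \<exists>d\<in>D t. (d,w) \<in> E}"
      using DK[OF tK] by auto
    obtain u where u: "u \<in> D t" "u \<in> U" using d(3) by blast
    obtain Y where Y: "Y \<subseteq> D t" "countable Y" "connected_in E Y" "u \<in> Y" "infinite {w\<in>W. \<exists>y\<in>Y. (y,w) \<in> E}"
      using Y_lemma[OF d(2) u(1) Wc d(4)] by blast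
    have "Y \<inter> U \<noteq> {}" using Y(4) u(2) by blast
    then show ?thesis using Y by blast
  qed
  define Y where "Y t = (SOME Y. Y \<subseteq> D t \<and> countable Y \<and> connected_in E Y \<and> Y \<inter> U \<noteq> {} \<and> infinite {w\<in>W. \<exists>y\<in>Y. (y,w) \<in> E})" for t
  have Yp: "Y t \<subseteq> D t \<and> countable (Y t) \<and> connected_in E (Y t) \<and> Y t \<inter> U \<noteq> {} \<and> infinite {w\<in>W. \<exists>y\<in>Y t. (y,w) \<in> E}"
    if "t \<in> K" for t
    unfolding Y_def using someI_ex[OF exY[OF that]] .
  define N where "N t = {w\<in>W. \<exists>y\<in>Y t. (y,w) \<in> E}" for t
  have YD: "Y t \<subseteq> D t" if "t \<in> K" for t using Yp[OF that] by blast
  have Ycnt: "countable (Y t)" if "t \<in> K" for t using Yp[OF that] by blast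
  have Yconn: "connected_in E (Y t)" if "t \<in> K" for t using Yp[OF that] by blast
  have YU: "Y t \<inter> U \<noteq> {}" if "t \<in> K" for t using Yp[OF that] by blast
  have Ninf: "infinite (N t)" if "t \<in> K" for t using Yp[OF that] unfolding N_def by blast
  have YV: "Y t \<subseteq> V" if "t \<in> K" for t using YD[OF that] DK[OF that] by blast
  have YW: "w \<notin> Y t" if "t \<in> K" "w \<in> W" for t w using YD[OF that(1)] DK[OF that(1)] that(2) by blast
  have Ydisj: "Y t \<inter> Y t' = {}" if "t \<in> K" "t' \<in> K" "t \<noteq> t'" for t t'
    using YD[OF that(1)] YD[OF that(2)] disj[OF that] by blast
  define A where "A w = {t\<in>K. w \<in> N t}" for w
  define W1 where "W1 = {w\<in>W. uncountable (A w)}"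
  define K1 where "K1 = K - (\<Union>w\<in>W - W1. A w)"
  have cntrem: "countable (\<Union>w\<in>W - W1. A w)"
  proof (rule countable_UN)
    show "countable (W - W1)" using Wc by (rule countable_subset[rotated]) auto
    show "countable (A w)" if "w \<in> W - W1" for w using that unfolding W1_def by auto
  qed
  have K1unc: "uncountable K1"
  proof
    assume "countable K1"
    then have "countable (K1 \<union> (\<Union>w\<in>W - W1. A w))" using cntrem by auto
    moreover have "K \<subseteq> K1 \<union> (\<Union>w\<in>W - W1. A w)" unfolding K1_def by blast
    ultimately show False using Kunc countable_subset by blast
  qed
  have NW1: "N t \<subseteq> W1" if "t \<in> K1" for t
  proof
    fix w assume w: "w \<in> N t"
    have tK: "t \<in> K" using that unfolding K1_def by auto
    have wW: "w \<in> W" using w unfolding N_def by auto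
    have "t \<in> A w" using tK w unfolding A_def by auto
    then show "w \<in> W1" using that wW unfolding K1_def by blast
  qed
  have W1c: "countable W1" using Wc by (rule countable_subset[rotated]) (auto simp: W1_def)
  obtain g where g: "inj_on g W1" "\<forall>w\<in>W1. g w \<in> A w"
    using inj_choice[OF W1c, of A] unfolding W1_def by auto
  have gK: "g w \<in> K" "w \<in> N (g w)" if "w \<in> W1" for w using g(2) that unfolding A_def by auto
  have W1W: "W1 \<subseteq> W" unfolding W1_def by auto
  define K2 where "K2 = K1 - g ` W1"
  have K2unc: "uncountable K2"
  proof
    assume "countable K2"
    then have "countable (K2 \<union> g ` W1)" using W1c by auto
    moreover have "K1 \<subseteq> K2 \<union> g ` W1" unfolding K2_def by blast
    ultimately show False using K1unc countable_subset by blast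
  qed
  have K2K: "K2 \<subseteq> K" unfolding K2_def K1_def by auto
  define X where "X w = insert w (Y (g w))" for w
  define B where "B = X ` W1 \<union> Y ` K2"
  define EH where "EH = {(X w, Y t) | w t. w \<in> W1 \<and> t \<in> K2 \<and> w \<in> N t} \<union> {(Y t, X w) | w t. w \<in> W1 \<and> t \<in> K2 \<and> w \<in> N t}"
  have Xinj: "inj_on X W1"
  proof (rule inj_onI)
    fix w w' assume w: "w \<in> W1" "w' \<in> W1" "X w = X w'"
    then have "w \<in> X w'" unfolding X_def by auto
    then show "w = w'" using YW[OF gK(1)[OF w(2)]] w(1) W1W unfolding X_def by auto
  qed
  have Yinj: "inj_on Y K2"
  proof (rule inj_onI)
    fix t t' assume t: "t \<in> K2" "t' \<in> K2" "Y t = Y t'"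
    show "t = t'"
    proof (rule ccontr)
      assume "t \<noteq> t'"
      then have "Y t \<inter> Y t' = {}" using Ydisj t K2K by blast
      then show False using t(3) YU t K2K by auto
    qed
  qed
  have XY_ne: "X w \<noteq> Y t" if "w \<in> W1" "t \<in> K" for w t
    using YW[OF that(2)] that(1) W1W unfolding X_def by auto
  have disjB: "\<forall>P\<in>B. \<forall>Q\<in>B. P \<noteq> Q \<longrightarrow> P \<inter> Q = {}"
  proof (intro ballI impI)
    fix P Q assume P: "P \<in> B" and Q: "Q \<in> B" and PQ: "P \<noteq> Q"
    have XX: "X w \<inter> X w' = {}" if "w \<in> W1" "w' \<in> W1" "X w \<noteq> X w'" for w w'
    proof -
      have ww: "w \<noteq> w'" using that by auto
      then have "g w \<noteq> g w'" using g(1) that(1,2) by (meson inj_onD)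
      then have "Y (g w) \<inter> Y (g w') = {}" using Ydisj gK that by blast
      moreover have "w \<notin> Y (g w')" "w' \<notin> Y (g w)" using YW gK that W1W by blast+
      ultimately show ?thesis using ww unfolding X_def by auto
    qed
    have XYd: "X w \<inter> Y t = {}" if "w \<in> W1" "t \<in> K2" for w t
    proof -
      have "t \<noteq> g w" using that unfolding K2_def by auto
      then have "Y (g w) \<inter> Y t = {}" using Ydisj gK that K2K by blast
      moreover have "w \<notin> Y t" using YW that K2K W1W by blast
      ultimately show ?thesis unfolding X_def by auto
    qed
    have YYd: "Y t \<inter> Y t' = {}" if "t \<in> K2" "t' \<in> K2" "Y t \<noteq> Y t'" for t t'
      using Ydisj that K2K by blast
    consider (xx) w w' where "w \<in> W1" "w' \<in> W1" "P = X w" "Q = X w'"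
      | (xy) w t where "w \<in> W1" "t \<in> K2" "P = X w" "Q = Y t"
      | (yx) w t where "w \<in> W1" "t \<in> K2" "P = Y t" "Q = X w"
      | (yy) t t' where "t \<in> K2" "t' \<in> K2" "P = Y t" "Q = Y t'"
      using P Q unfolding B_def by blast
    then show "P \<inter> Q = {}"
    proof cases
      case xx then show ?thesis using XX PQ by blast
    next
      case xy then show ?thesis using XYd by blast
    next
      case yx then show ?thesis using XYd by blast
    next
      case yy then show ?thesis using YYd PQ by blast
    qed
  qed
  have conB: "\<forall>P\<in>B. connected_in E P"
  proof
    fix P assume "P \<in> B"
    then consider (x) w where "w \<in> W1" "P = X w" | (y) t where "t \<in> K2" "P = Y t" unfolding B_def by blast
    then show "connected_in E P"
    proof cases
      case (x w)
      obtain y where y: "y \<in> Y (g w)" "(y,w) \<in> E" using gK(2)[OF x(1)] unfolding N_def by blast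
      have "(w,y) \<in> E" using E_sym y(2) .
      then have "connected_in E (insert w (Y (g w)))" using conn_insert_edge[OF Yconn[OF gK(1)[OF x(1)]] y(1)] by blast
      then show ?thesis using x(2) unfolding X_def by simp
    next
      case y then show ?thesis using Yconn K2K by auto
    qed
  qed
  have EHB: "EH \<subseteq> B \<times> B" unfolding EH_def B_def by blast
  have EHsym: "(P,Q) \<in> EH \<Longrightarrow> (Q,P) \<in> EH" for P Q unfolding EH_def by blast
  have EHirr: "(P,Q) \<in> EH \<Longrightarrow> P \<noteq> Q" for P Q
    unfolding EH_def using XY_ne K2K by blast
  have graphB: "graph B EH" unfolding graph_def sym_def irrefl_def using EHB EHsym EHirr by blast
  have edgesB: "\<forall>(P, Q)\<in>EH. \<exists>x\<in>P. \<exists>y\<in>Q. (x, y) \<in> E"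
  proof (intro ballI, clarify)
    fix P Q assume "(P,Q) \<in> EH"
    then consider (a) w t where "w \<in> W1" "t \<in> K2" "w \<in> N t" "P = X w" "Q = Y t"
      | (b) w t where "w \<in> W1" "t \<in> K2" "w \<in> N t" "P = Y t" "Q = X w" unfolding EH_def by blast
    then show "\<exists>x\<in>P. \<exists>y\<in>Q. (x, y) \<in> E"
    proof cases
      case a
      obtain y where y: "y \<in> Y t" "(y,w) \<in> E" using a(3) unfolding N_def by blast
      have "(w,y) \<in> E" using E_sym y(2) .
      then show ?thesis using a(4,5) y(1) unfolding X_def by blast
    next
      case b
      obtain y where y: "y \<in> Y t" "(y,w) \<in> E" using b(3) unfolding N_def by blast
      then show ?thesis using b(4,5) unfolding X_def by blast
    qed
  qed
  have BV: "B \<subseteq> Pow V"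
  proof
    fix P assume "P \<in> B"
    then consider (x) w where "w \<in> W1" "P = X w" | (y) t where "t \<in> K2" "P = Y t" unfolding B_def by blast
    then show "P \<in> Pow V"
    proof cases
      case x then show ?thesis using YV[OF gK(1)[OF x(1)]] W1W WV unfolding X_def by auto
    next
      case y then show ?thesis using YV K2K by auto
    qed
  qed
  have BU: "\<forall>P\<in>B. P \<inter> U \<noteq> {}"
  proof
    fix P assume "P \<in> B"
    then consider (x) w where "w \<in> W1" "P = X w" | (y) t where "t \<in> K2" "P = Y t" unfolding B_def by blast
    then show "P \<inter> U \<noteq> {}"
    proof cases
      case x then show ?thesis using YU[OF gK(1)[OF x(1)]] unfolding X_def by auto
    next
      case y then show ?thesis using YU K2K by auto
    qed
  qed
  have Bc: "\<forall>P\<in>B. countable P"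
  proof
    fix P assume "P \<in> B"
    then consider (x) w where "w \<in> W1" "P = X w" | (y) t where "t \<in> K2" "P = Y t" unfolding B_def by blast
    then show "countable P"
    proof cases
      case x then show ?thesis using Ycnt[OF gK(1)[OF x(1)]] unfolding X_def by auto
    next
      case y then show ?thesis using Ycnt K2K by auto
    qed
  qed
  have "rooted_minor V E U B EH"
    unfolding rooted_minor_def is_minor_def using BV disjB conB graphB edgesB BU by blast
  then have "countable_colouring_number B EH" using minorH Bc by blast
  then obtain r where r: "well_order_on B r" "\<forall>v\<in>B. finite {u\<in>B. (u, v) \<in> EH \<and> (u, v) \<in> r}"
    unfolding countable_colouring_number_def by blast
  have infY: "\<forall>P\<in>Y ` K2. infinite {Q\<in>X ` W1. (Q,P) \<in> EH}"
  proof
    fix P assume "P \<in> Y ` K2"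
    then obtain t where t: "t \<in> K2" "P = Y t" by blast
    have tK1: "t \<in> K1" using t unfolding K2_def by auto
    have "X ` N t \<subseteq> {Q\<in>X ` W1. (Q,P) \<in> EH}"
      using NW1[OF tK1] t unfolding EH_def by blast
    moreover have "infinite (X ` N t)"
    proof
      assume "finite (X ` N t)"
      moreover have "inj_on X (N t)" using Xinj NW1[OF tK1] inj_on_subset by blast
      ultimately have "finite (N t)" using finite_imageD by blast
      then show False using Ninf tK1 unfolding K1_def by auto
    qed
    ultimately show "infinite {Q\<in>X ` W1. (Q,P) \<in> EH}" using infinite_super by blast
  qed
  have "countable (Y ` K2)"
    by (rule ccn_count[OF r(1) r(2) EHsym EHirr _ _ _ infY]) (auto simp: B_def W1c)
  then have "countable K2" using Yinj countable_image_inj_on by blast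
  then show False using K2unc by simp
qed

end



context setting begin

lemma Vt_countable:
  assumes s: "s \<in> T" and c: "countable (sdown le s)"
  shows "countable (Vt s)"
proof -
  have "|Vt s| \<le>o |sdown le s| +c natLeq" using slimT s unfolding slim_def by blast
  moreover have "|sdown le s| \<le>o natLeq" using c countable_card_le_natLeq by blast
  then have "|sdown le s| +c natLeq =o natLeq"
    using csum_absorb2'[OF natLeq_Card_order] natLeq_cinfinite by blast
  ultimately have "|Vt s| \<le>o natLeq" using ordLeq_ordIso_trans by blast
  then show ?thesis using countable_card_le_natLeq by blast
qed

definition W0 :: "'t set" where "W0 = {s\<in>T. countable (sdown le s)}"

definition B0 :: "'v set set" where "B0 = Vt ` W0"
definition EH0 :: "('v set \<times> 'v set) set" where
  "EH0 = {(Vt a, Vt b) | a b. a \<in> W0 \<and> b \<in> W0 \<and> (a,b) \<in> contraction E T Vt}"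

lemma W0T: "W0 \<subseteq> T" unfolding W0_def by auto

lemma minor0: "rooted_minor V E U B0 EH0"
  unfolding rooted_minor_def is_minor_def
proof (intro conjI)
  show "B0 \<subseteq> Pow V" unfolding B0_def using Vt_V W0T by blast
  show "\<forall>X\<in>B0. \<forall>Y\<in>B0. X \<noteq> Y \<longrightarrow> X \<inter> Y = {}" unfolding B0_def using Vt_disj W0T by blast
  show "\<forall>X\<in>B0. connected_in E X" unfolding B0_def using Vt_conn W0T by blast
  show "graph B0 EH0" unfolding graph_def sym_def irrefl_def
  proof (intro conjI allI impI notI)
    show "EH0 \<subseteq> B0 \<times> B0" unfolding EH0_def B0_def by blast
    fix x y assume "(x,y) \<in> EH0"
    then obtain a b where ab: "a \<in> W0" "b \<in> W0" "(a,b) \<in> contraction E T Vt" "x = Vt a" "y = Vt b"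
      unfolding EH0_def by blast
    have "(b,a) \<in> contraction E T Vt" using ce_sym ab(3) .
    then show "(y,x) \<in> EH0" using ab unfolding EH0_def by blast
  next
    fix x assume "(x,x) \<in> EH0"
    then obtain a b where ab: "a \<in> W0" "b \<in> W0" "(a,b) \<in> contraction E T Vt" "x = Vt a" "x = Vt b"
      unfolding EH0_def by blast
    then have "a \<noteq> b" "a \<in> T" "b \<in> T" unfolding ce_iff by auto
    then show False using Vt_inj ab(4,5) by metis
  qed
  show "\<forall>(X, Y)\<in>EH0. \<exists>x\<in>X. \<exists>y\<in>Y. (x, y) \<in> E"
    unfolding EH0_def ce_iff by blast
  show "\<forall>X\<in>B0. X \<inter> U \<noteq> {}" unfolding B0_def using rootedT W0T unfolding U_rooted_tree_def by blast
qed

lemma B0_countable: "\<forall>X\<in>B0. countable X"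
  unfolding B0_def W0_def using Vt_countable by blast

definition r0 :: "('v set \<times> 'v set) set" where
  "r0 = (SOME r. well_order_on B0 r \<and> (\<forall>v\<in>B0. finite {u\<in>B0. (u, v) \<in> EH0 \<and> (u, v) \<in> r}))"

lemma r0: "well_order_on B0 r0" "\<forall>v\<in>B0. finite {u\<in>B0. (u, v) \<in> EH0 \<and> (u, v) \<in> r0}"
proof -
  have "countable_colouring_number B0 EH0" using minorH minor0 B0_countable by blast
  then have "\<exists>r. well_order_on B0 r \<and> (\<forall>v\<in>B0. finite {u\<in>B0. (u, v) \<in> EH0 \<and> (u, v) \<in> r})"
    unfolding countable_colouring_number_def .
  then have "well_order_on B0 r0 \<and> (\<forall>v\<in>B0. finite {u\<in>B0. (u, v) \<in> EH0 \<and> (u, v) \<in> r0})"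
    unfolding r0_def by (rule someI_ex)
  then show "well_order_on B0 r0" "\<forall>v\<in>B0. finite {u\<in>B0. (u, v) \<in> EH0 \<and> (u, v) \<in> r0}" by auto
qed

definition Fn :: "'t \<Rightarrow> 't set" where
  "Fn b = {a\<in>W0. (a,b) \<in> contraction E T Vt \<and> (Vt a, Vt b) \<in> r0}"

lemma Fn_finite: assumes "b \<in> W0" shows "finite (Fn b)"
proof -
  have "Vt ` Fn b \<subseteq> {u\<in>B0. (u, Vt b) \<in> EH0 \<and> (u, Vt b) \<in> r0}"
    unfolding Fn_def B0_def EH0_def using assms by blast
  moreover have "Vt b \<in> B0" using assms unfolding B0_def by auto
  ultimately have "finite (Vt ` Fn b)" using r0(2) finite_subset by blast
  moreover have "inj_on Vt (Fn b)" unfolding Fn_def using Vt_inj W0T by (intro inj_onI) blast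
  ultimately show ?thesis using finite_imageD by blast
qed

lemma catch:
  assumes t: "t \<in> W0" and inf: "infinite L" and L: "L \<subseteq> {u\<in>W0. (u,t) \<in> contraction E T Vt}"
  shows "\<exists>u\<in>L. t \<in> Fn u"
proof -
  have "\<not> L \<subseteq> Fn t" using Fn_finite[OF t] inf finite_subset by blast
  then obtain u where u: "u \<in> L" "u \<notin> Fn t" by blast
  have uW: "u \<in> W0" "(u,t) \<in> contraction E T Vt" using u L by auto
  then have ne: "u \<noteq> t" "u \<in> T" "t \<in> T" unfolding ce_iff by auto
  have "(Vt u, Vt t) \<notin> r0" using u uW unfolding Fn_def by auto
  moreover have "Vt u \<noteq> Vt t" using ne Vt_inj by blast
  moreover have "total_on B0 r0" using r0(1) unfolding well_order_on_def linear_order_on_def by auto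
  moreover have "Vt u \<in> B0" "Vt t \<in> B0" using uW t unfolding B0_def by auto
  ultimately have "(Vt t, Vt u) \<in> r0" unfolding total_on_def by blast
  moreover have "(t,u) \<in> contraction E T Vt" using ce_sym uW(2) .
  ultimately have "t \<in> Fn u" unfolding Fn_def using t by blast
  then show ?thesis using u by blast
qed

lemma finite_max:
  assumes "finite F" "F \<noteq> {}"
  shows "F \<subseteq> down le t \<Longrightarrow> \<exists>m\<in>F. \<forall>x\<in>F. (x,m) \<in> le"
  using assms
proof (induction rule: finite_ne_induct)
  case (singleton x)
  then have "x \<in> T" unfolding down_def using le_T1 by blast
  then show ?case using le_refl by auto
next
  case (insert x F)
  then obtain m where m: "m \<in> F" "\<forall>y\<in>F. (y,m) \<in> le" by blast
  have "(x,t) \<in> le" "(m,t) \<in> le" using insert(5) m(1) unfolding down_def by auto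
  then have "(x,m) \<in> le \<or> (m,x) \<in> le" using down_total by blast
  then show ?case
  proof
    assume "(x,m) \<in> le" then show ?thesis using m by blast
  next
    assume mx: "(m,x) \<in> le"
    have "x \<in> T" using \<open>(x,t) \<in> le\<close> le_T1 by blast
    then show ?thesis using m mx le_trans le_refl by blast
  qed
qed

lemma lim_infinite:
  assumes t: "t \<in> T" and ne: "sdown le t \<noteq> {}"
    and nomax: "\<forall>m\<in>sdown le t. \<exists>s\<in>sdown le t. (m,s) \<in> le \<and> m \<noteq> s"
  shows "infinite {u\<in>sdown le t. (u,t) \<in> contraction E T Vt}"
proof
  let ?L = "{u\<in>sdown le t. (u,t) \<in> contraction E T Vt}"
  assume fin: "finite ?L"
  obtain s0 where s0: "s0 \<in> sdown le t" using ne by auto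
  obtain u0 where "u0 \<in> sdown le t" "(u0,t) \<in> contraction E T Vt" using ce_cof[OF t s0] by blast
  then have Lne: "?L \<noteq> {}" by blast
  have "?L \<subseteq> down le t" unfolding sdown_def down_def by auto
  then have "\<exists>m\<in>?L. \<forall>x\<in>?L. (x,m) \<in> le" using finite_max[OF fin Lne] by blast
  then obtain m where m: "m \<in> ?L" "\<forall>x\<in>?L. (x,m) \<in> le" by blast
  obtain s where s: "s \<in> sdown le t" "(m,s) \<in> le" "m \<noteq> s" using nomax m(1) by blast
  obtain u where u: "u \<in> sdown le t" "(u,t) \<in> contraction E T Vt" "(s,u) \<in> le" using ce_cof[OF t s(1)] by blast
  have "(u,m) \<in> le" using m u by blast
  moreover have "(m,u) \<in> le" using s(2) u(3) le_trans by blast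
  ultimately have "u = m" using le_antisym by blast
  then have "s = m" using s(2) u(3) le_antisym by blast
  then show False using s(3) by simp
qed

end



context setting begin

lemma all_countable: "\<forall>t\<in>T. countable (sdown le t)"
proof (rule ccontr)
  assume "\<not> (\<forall>t\<in>T. countable (sdown le t))"
  then obtain t0 where t0: "t0 \<in> T" "uncountable (sdown le t0)" by blast
  let ?C = "{s \<in> down le t0. uncountable (sdown le s)}"
  have "?C \<noteq> {}" using t0 le_refl unfolding down_def by auto
  moreover have "?C \<subseteq> down le t0" by blast
  ultimately have "\<exists>m\<in>?C. \<forall>a\<in>?C. (m,a) \<in> le" using least_in_down[of ?C t0] t0(1) by simp
  then obtain t' where t': "t' \<in> ?C" "\<forall>a\<in>?C. (t',a) \<in> le" by (elim bexE) simp
  have t'T: "t' \<in> T" using t' le_T1 unfolding down_def by blast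
  have t't0: "(t',t0) \<in> le" using t' unfolding down_def by auto
  define Q where "Q = sdown le t'"
  have Qunc: "uncountable Q" using t' unfolding Q_def by auto
  have QW: "q \<in> W0" if "q \<in> Q" for q
  proof -
    have q: "(q,t') \<in> le" "q \<noteq> t'" using that unfolding Q_def sdown_def by auto
    have qT: "q \<in> T" using q le_T1 by blast
    have "countable (sdown le q)"
    proof (rule ccontr)
      assume "\<not> countable (sdown le q)"
      then have "q \<in> ?C" using q t't0 le_trans unfolding down_def by blast
      then have "(t',q) \<in> le" using t' by blast
      then show False using q le_antisym by blast
    qed
    then show ?thesis unfolding W0_def using qT by blast
  qed
  have QT: "Q \<subseteq> T" using QW W0T by blast
  have Qdown: "Q \<subseteq> down le t'" unfolding Q_def sdown_def down_def by auto
  have Qtot: "(a,b) \<in> le \<or> (b,a) \<in> le" if "a \<in> Q" "b \<in> Q" for a b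
    using that down_total unfolding Q_def sdown_def by blast
  have Qsd: "sdown le q \<subseteq> Q" if "q \<in> Q" for q
    using that le_trans le_antisym unfolding Q_def sdown_def by blast
  have bounded: "\<exists>q\<in>Q. \<forall>f\<in>F. (f,q) \<in> le \<and> f \<noteq> q" if F: "countable F" "F \<subseteq> Q" for F
  proof -
    have dc: "countable (down le f)" if "f \<in> Q" for f
    proof -
      have "down le f = insert f (sdown le f)" using QT that le_refl unfolding down_def sdown_def by auto
      then show ?thesis using QW[OF that] unfolding W0_def by auto
    qed
    have "countable (\<Union>f\<in>F. down le f)" using F dc by (intro countable_UN) auto
    then have "\<not> Q \<subseteq> (\<Union>f\<in>F. down le f)" using Qunc countable_subset by blast
    then obtain q where q: "q \<in> Q" "q \<notin> (\<Union>f\<in>F. down le f)" by blast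
    have "\<forall>f\<in>F. (f,q) \<in> le \<and> f \<noteq> q"
    proof
      fix f assume f: "f \<in> F"
      have "(q,f) \<notin> le" using q f unfolding down_def by blast
      moreover then have "(f,q) \<in> le" using Qtot f F(2) q(1) by blast
      ultimately show "(f,q) \<in> le \<and> f \<noteq> q" using le_refl QT q by blast
    qed
    then show ?thesis using q by blast
  qed
  define Bad where "Bad d = {a\<in>Q. \<exists>b\<in>Q. (b,d) \<in> le \<and> a \<in> Fn b}" for d
  have Badc: "countable (Bad d)" if "d \<in> Q" for d
  proof -
    have "Bad d \<subseteq> (\<Union>b\<in>down le d. Fn b)" unfolding Bad_def down_def by blast
    moreover have "countable (\<Union>b\<in>down le d. Fn b)"
    proof (rule countable_UN)
      have "down le d = insert d (sdown le d)" using QT that le_refl unfolding down_def sdown_def by auto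
      then show "countable (down le d)" using QW[OF that] unfolding W0_def by auto
      show "countable (Fn b)" if "b \<in> down le d" for b
      proof -
        have "b \<in> Q" using that Qsd[of d] \<open>d \<in> Q\<close> unfolding down_def sdown_def by (cases "b = d") auto
        then show ?thesis using Fn_finite QW countable_finite by blast
      qed
    qed
    ultimately show ?thesis using countable_subset by blast
  qed
  have nxt: "\<exists>q\<in>Q. \<forall>f\<in>insert d (Bad d). (f,q) \<in> le \<and> f \<noteq> q" if "d \<in> Q" for d
    using bounded[of "insert d (Bad d)"] Badc[OF that] that unfolding Bad_def by auto
  obtain q0 where q0: "q0 \<in> Q" using Qunc by (metis countable_empty equals0I)
  define dl where "dl = rec_nat q0 (\<lambda>n d. SOME q. q\<in>Q \<and> (\<forall>f\<in>insert d (Bad d). (f,q) \<in> le \<and> f \<noteq> q))"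
  have dl0: "dl 0 = q0" unfolding dl_def by simp
  have dlS: "dl (Suc n) = (SOME q. q\<in>Q \<and> (\<forall>f\<in>insert (dl n) (Bad (dl n)). (f,q) \<in> le \<and> f \<noteq> q))" for n
    unfolding dl_def by simp
  have dlQ: "dl n \<in> Q \<and> (\<forall>f\<in>insert (dl n) (Bad (dl n)). (f, dl (Suc n)) \<in> le \<and> f \<noteq> dl (Suc n)) \<and> dl (Suc n) \<in> Q" for n
  proof (induction n)
    case 0
    have "\<exists>q. q\<in>Q \<and> (\<forall>f\<in>insert (dl 0) (Bad (dl 0)). (f,q) \<in> le \<and> f \<noteq> q)" using nxt[of "dl 0"] q0 dl0 by auto
    from someI_ex[OF this] show ?case using q0 dl0 dlS[of 0] by simp
  next
    case (Suc n)
    then have "dl (Suc n) \<in> Q" by blast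
    then have "\<exists>q. q\<in>Q \<and> (\<forall>f\<in>insert (dl (Suc n)) (Bad (dl (Suc n))). (f,q) \<in> le \<and> f \<noteq> q)" using nxt by blast
    from someI_ex[OF this] show ?case using \<open>dl (Suc n) \<in> Q\<close> dlS[of "Suc n"] by simp
  qed
  have dlQ': "dl n \<in> Q" for n using dlQ by blast
  have dlA: "\<forall>f\<in>insert (dl n) (Bad (dl n)). (f, dl (Suc n)) \<in> le \<and> f \<noteq> dl (Suc n)" for n
    using dlQ[of n] by (elim conjE)
  have dlstep: "(dl n, dl (Suc n)) \<in> le" "dl n \<noteq> dl (Suc n)" for n
    using bspec[OF dlA[of n], of "dl n"] by simp_all
  have dlbad: "(f, dl (Suc n)) \<in> le" "f \<noteq> dl (Suc n)" if "f \<in> Bad (dl n)" for f n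
    using bspec[OF dlA[of n], of f] that by simp_all
  define Up where "Up = {q\<in>Q. \<forall>n. (dl n, q) \<in> le \<and> dl n \<noteq> q}"
  have "Up \<noteq> {}"
  proof -
    have "countable (range dl)" by simp
    moreover have "range dl \<subseteq> Q" using dlQ' by blast
    ultimately have "\<exists>q\<in>Q. \<forall>f\<in>range dl. (f,q) \<in> le \<and> f \<noteq> q" by (rule bounded)
    then obtain q where "q \<in> Q" "\<forall>f\<in>range dl. (f,q) \<in> le \<and> f \<noteq> q" by blast
    then show ?thesis unfolding Up_def by blast
  qed
  moreover have "Up \<subseteq> down le t'" using Qdown unfolding Up_def by blast
  ultimately have "\<exists>m\<in>Up. \<forall>x\<in>Up. (m,x) \<in> le" using least_in_down[of Up t' ] t'T by simp
  then obtain a where a: "a \<in> Up" "\<forall>x\<in>Up. (a,x) \<in> le" by blast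
  have aQ: "a \<in> Q" using a unfolding Up_def by blast
  have aT: "a \<in> T" using aQ QT by blast
  have below: "\<exists>n. (s, dl n) \<in> le" if s: "s \<in> sdown le a" for s
  proof (rule ccontr)
    assume nb: "\<not> (\<exists>n. (s, dl n) \<in> le)"
    have sQ: "s \<in> Q" using Qsd[OF aQ] s by blast
    have "\<forall>n. (dl n, s) \<in> le \<and> dl n \<noteq> s"
    proof
      fix n
      have "(dl n, s) \<in> le" using Qtot[OF dlQ' sQ] nb by blast
      moreover have "dl n \<noteq> s" using nb le_refl sQ QT by blast
      ultimately show "(dl n, s) \<in> le \<and> dl n \<noteq> s" by blast
    qed
    then have "s \<in> Up" unfolding Up_def using sQ by blast
    then have "(a,s) \<in> le" using a by blast
    then show False using s le_antisym unfolding sdown_def by blast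
  qed
  have adl: "(dl n, a) \<in> le \<and> dl n \<noteq> a" for n using a unfolding Up_def by blast
  have sd_ne: "sdown le a \<noteq> {}" using adl[of 0] unfolding sdown_def by blast
  have nomax: "\<forall>m\<in>sdown le a. \<exists>s\<in>sdown le a. (m,s) \<in> le \<and> m \<noteq> s"
  proof
    fix m assume m: "m \<in> sdown le a"
    obtain n where n: "(m, dl n) \<in> le" using below[OF m] by blast
    have step: "(dl n, dl (Suc n)) \<in> le" "dl n \<noteq> dl (Suc n)" using dlstep by auto
    have "(m, dl (Suc n)) \<in> le" using n step le_trans by blast
    moreover have "m \<noteq> dl (Suc n)" using n step le_antisym by blast
    moreover have "dl (Suc n) \<in> sdown le a" using adl unfolding sdown_def by blast
    ultimately show "\<exists>s\<in>sdown le a. (m,s) \<in> le \<and> m \<noteq> s" by blast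
  qed
  have inf: "infinite {u\<in>sdown le a. (u,a) \<in> contraction E T Vt}"
    using lim_infinite[OF aT sd_ne nomax] .
  have sub: "{u\<in>sdown le a. (u,a) \<in> contraction E T Vt} \<subseteq> {u\<in>W0. (u,a) \<in> contraction E T Vt}"
    using Qsd[OF aQ] QW by blast
  obtain u where u: "u \<in> sdown le a" "(u,a) \<in> contraction E T Vt" "a \<in> Fn u"
    using catch[OF QW[OF aQ] inf sub] by blast
  obtain n where n: "(u, dl n) \<in> le" using below[OF u(1)] by blast
  have "u \<in> Q" using Qsd[OF aQ] u(1) by blast
  then have "a \<in> Bad (dl n)" unfolding Bad_def using aQ n u(3) by blast
  then have "(a, dl (Suc n)) \<in> le" "a \<noteq> dl (Suc n)" using dlbad by auto
  moreover have "(dl (Suc n), a) \<in> le" using adl by blast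
  ultimately show False using le_antisym by blast
qed

lemma W0_eq: "W0 = T" unfolding W0_def using all_countable by blast

end



context setting begin

definition vt :: "'t \<Rightarrow> 'v" where "vt t = (SOME v. v \<in> Vt t)"
definition Zt :: "'t \<Rightarrow> 'v set" where "Zt t = V - GS Vt (sdown le t)"
definition Dt :: "'t \<Rightarrow> 'v set" where "Dt t = rclass (Zt t) (vt t)"
definition Nb :: "'t \<Rightarrow> 'v set" where "Nb t = {h \<in> GS Vt (sdown le t). \<exists>d\<in>Dt t. (d,h) \<in> E}"
definition badch :: "'t \<Rightarrow> 't set" where
  "badch p = {t\<in>T. sdown le t = down le p \<and> infinite (Nb t)}"
definition Rel :: "('t \<times> 't) set" where
  "Rel = {(s,s'). s \<in> T \<and> s' \<in> T \<and> ((s',s) \<in> le \<or> s' \<in> Fn s \<or> s' \<in> badch s)}"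

lemma vt: "t \<in> T \<Longrightarrow> vt t \<in> Vt t"
  unfolding vt_def using Vt_ne by (metis ex_in_conv someI_ex)

lemma Vt_Zt: assumes "t \<in> T" shows "Vt t \<subseteq> Zt t"
proof
  fix x assume x: "x \<in> Vt t"
  have "x \<in> V" using x Vt_V assms by blast
  moreover have "x \<notin> GS Vt (sdown le t)"
  proof
    assume "x \<in> GS Vt (sdown le t)"
    then obtain s where s: "s \<in> sdown le t" "x \<in> Vt s" unfolding GS_iff by blast
    then have "s \<in> T" "s \<noteq> t" unfolding sdown_def using le_T1 by auto
    then show False using Vt_same assms x s(2) by blast
  qed
  ultimately show "x \<in> Zt t" unfolding Zt_def by blast
qed

lemma Vt_Dt: assumes t: "t \<in> T" shows "Vt t \<subseteq> Dt t"
proof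
  fix x assume x: "x \<in> Vt t"
  have "reach (Vt t) (vt t) x" using conn_reach[OF Vt_conn[OF t] vt[OF t] x] .
  then have "reach (Zt t) (vt t) x" using Vt_Zt[OF t] by (rule reach_mono)
  then show "x \<in> Dt t" unfolding Dt_def rclass_def by blast
qed

lemma Dt_Zt: "t \<in> T \<Longrightarrow> Dt t \<subseteq> Zt t"
  unfolding Dt_def using rclass_sub vt Vt_Zt by blast

lemma Dt_conn: "connected_in E (Dt t)" unfolding Dt_def by (rule rclass_conn)

lemma Vt_count: "t \<in> T \<Longrightarrow> countable (Vt t)" using Vt_countable all_countable by blast

lemma down_count: assumes "p \<in> T" shows "countable (down le p)"
proof -
  have "down le p = insert p (sdown le p)" using assms le_refl unfolding down_def sdown_def by auto
  then show ?thesis using all_countable assms by auto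
qed

lemma badch_countable: assumes p: "p \<in> T" shows "countable (badch p)"
proof (rule count_family[where W = "GS Vt (down le p)" and D = Dt])
  show "GS Vt (down le p) \<subseteq> V" unfolding GS_def using Vt_V le_T1 unfolding down_def by blast
  show "countable (GS Vt (down le p))" unfolding GS_def
  proof (rule countable_UN)
    show "countable (down le p)" using down_count[OF p] .
    show "countable (Vt x)" if "x \<in> down le p" for x using that Vt_count le_T1 unfolding down_def by blast
  qed
  fix t assume t: "t \<in> badch p"
  have tT: "t \<in> T" and sd: "sdown le t = down le p" and inf: "infinite (Nb t)" using t unfolding badch_def by auto
  have "Dt t \<subseteq> V - GS Vt (down le p)" using Dt_Zt[OF tT] sd unfolding Zt_def by auto
  moreover have "Dt t \<inter> U \<noteq> {}" using Vt_Dt[OF tT] rootedT tT unfolding U_rooted_tree_def by blast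
  moreover have "infinite {w\<in>GS Vt (down le p). \<exists>d\<in>Dt t. (d,w) \<in> E}" using inf sd unfolding Nb_def by simp
  ultimately show "Dt t \<subseteq> V - GS Vt (down le p) \<and> connected_in E (Dt t) \<and> Dt t \<inter> U \<noteq> {} \<and>
                 infinite {w\<in>GS Vt (down le p). \<exists>d\<in>Dt t. (d,w) \<in> E}" using Dt_conn by blast
next
  fix t t' assume t: "t \<in> badch p" and t': "t' \<in> badch p" and ne: "t \<noteq> t'"
  have tT: "t \<in> T" "t' \<in> T" and sd: "sdown le t = down le p" "sdown le t' = down le p"
    using t t' unfolding badch_def by auto
  have Zeq: "Zt t' = Zt t" unfolding Zt_def using sd by simp
  have le1: "(a,b) \<in> le" if rab: "reach (Zt a) (vt a) (vt b)" and abT: "a \<in> T" "b \<in> T" for a b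
  proof -
    have "Zt a \<inter> GS Vt (sdown le a) = {}" unfolding Zt_def by blast
    then have "Inv a (Zt a) (vt b)" using key[OF abT(1) _ vt[OF abT(1)] rab] by blast
    then show ?thesis using vt[OF abT(2)] abT(2) unfolding Inv_def by blast
  qed
  show "Dt t \<inter> Dt t' = {}"
  proof (rule ccontr)
    assume "Dt t \<inter> Dt t' \<noteq> {}"
    then obtain x where x: "reach (Zt t) (vt t) x" "reach (Zt t) (vt t') x"
      unfolding Dt_def rclass_def Zeq by blast
    have r1: "reach (Zt t) (vt t) (vt t')" using x reach_sym reach_trans by blast
    have r2: "reach (Zt t') (vt t') (vt t)" using reach_sym[OF r1] Zeq by simp
    have "(t,t') \<in> le" using le1[OF r1 tT] .
    moreover have "(t',t) \<in> le" using le1[OF r2 tT(2) tT(1)] .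
    ultimately show False using le_antisym ne by blast
  qed
qed

lemma Rel_countable: "countable (Rel `` {s})"
proof (cases "s \<in> T")
  case True
  have "Rel `` {s} \<subseteq> down le s \<union> Fn s \<union> badch s" unfolding Rel_def down_def by auto
  moreover have "countable (down le s \<union> Fn s \<union> badch s)"
    using down_count[OF True] Fn_finite[of s] W0_eq True badch_countable[OF True] countable_finite by auto
  ultimately show ?thesis using countable_subset by blast
next
  case False then have "Rel `` {s} = {}" unfolding Rel_def by auto
  then show ?thesis by simp
qed

lemma Rel_star_countable: "countable (Rel\<^sup>* `` {s})"
proof -
  have pw: "countable ((Rel ^^ n) `` {s})" for n
  proof (induction n)
    case 0 then show ?case by simp
  next
    case (Suc n)
    have "(Rel ^^ Suc n) `` {s} = (\<Union>x\<in>(Rel ^^ n) `` {s}. Rel `` {x})" by auto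
    then show ?case using Suc Rel_countable by (simp add: countable_UN)
  qed
  have "Rel\<^sup>* `` {s} = (\<Union>n. (Rel ^^ n) `` {s})" using rtrancl_power by blast
  then show ?thesis using pw by (simp add: countable_UN)
qed

definition cl :: "'t set \<Rightarrow> 't set" where "cl X = Rel\<^sup>* `` (X \<inter> T)"

definition closed :: "'t set \<Rightarrow> bool" where "closed S \<longleftrightarrow> S \<subseteq> T \<and> Rel `` S \<subseteq> S"

lemma cl_closed: "closed (cl X)"
  unfolding closed_def cl_def
proof
  show "Rel\<^sup>* `` (X \<inter> T) \<subseteq> T"
  proof
    fix y assume "y \<in> Rel\<^sup>* `` (X \<inter> T)"
    then obtain x where x: "x \<in> X \<inter> T" "(x,y) \<in> Rel\<^sup>*" by blast
    from x(2) show "y \<in> T"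
    proof (induction rule: rtrancl_induct)
      case base then show ?case using x by auto
    next
      case (step y z) then show ?case unfolding Rel_def by auto
    qed
  qed
  show "Rel `` (Rel\<^sup>* `` (X \<inter> T)) \<subseteq> Rel\<^sup>* `` (X \<inter> T)"
    by (meson Image_mono order_refl rtrancl_into_rtrancl ImageE ImageI subsetI)
qed

lemma cl_sup: "X \<subseteq> T \<Longrightarrow> X \<subseteq> cl X" unfolding cl_def by auto

lemma cl_mono: "X \<subseteq> Y \<Longrightarrow> cl X \<subseteq> cl Y" unfolding cl_def by auto

lemma closed_Union: "(\<And>S. S \<in> F \<Longrightarrow> closed S) \<Longrightarrow> closed (\<Union>F)"
  unfolding closed_def by blast

lemma cl_UN: "cl X = (\<Union>x\<in>X \<inter> T. Rel\<^sup>* `` {x})" unfolding cl_def by auto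

lemma closed_down: "closed S \<Longrightarrow> s \<in> S \<Longrightarrow> (s',s) \<in> le \<Longrightarrow> s' \<in> S"
  unfolding closed_def Rel_def using le_T1 by blast

lemma closed_rooted: "closed S \<Longrightarrow> rooted_subtree T le S"
  unfolding rooted_subtree_def using closed_down unfolding closed_def by blast

end



context setting begin

lemma VtS: assumes "t \<in> T" "t \<notin> S" "S \<subseteq> T" shows "Vt t \<inter> GS Vt S = {}"
  using assms Vt_disj unfolding GS_def by blast

lemma slt:
  assumes cS: "closed S" and s: "s \<in> S" and t: "t \<notin> S" and ta: "(t,a) \<in> le"
    and cmp: "(a,s) \<in> le \<or> (s,a) \<in> le"
  shows "s \<in> sdown le t"
proof -
  have as: "(a,s) \<notin> le"
  proof
    assume "(a,s) \<in> le"
    then have "(t,s) \<in> le" using ta le_trans by blast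
    then show False using closed_down[OF cS s] t by blast
  qed
  then have sa: "(s,a) \<in> le" using cmp by blast
  have "(s,t) \<in> le \<or> (t,s) \<in> le" using down_total[OF sa ta] .
  moreover have "(t,s) \<notin> le" using closed_down[OF cS s] t by blast
  ultimately have "(s,t) \<in> le" by blast
  moreover have "s \<noteq> t" using s t by blast
  ultimately show ?thesis unfolding sdown_def by blast
qed

lemma main_fa:
  assumes cS: "closed S" and Sne: "S \<noteq> {}"
  shows "finite_adhesion V E (GS Vt S) U"
  unfolding finite_adhesion_def
proof (intro allI impI, elim conjE)
  fix C assume comp: "component_of E (V - GS Vt S) C" and CU: "C \<inter> U \<noteq> {}"
  have ST: "S \<subseteq> T" using cS unfolding closed_def by blast
  have CV: "C \<subseteq> V - GS Vt S" using comp unfolding component_of_def by blast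
  have Cconn: "connected_in E C" using comp unfolding component_of_def by blast
  obtain u where u: "u \<in> C" "u \<in> U" using CU by blast
  have "u \<in> GS Vt T" using UG u(2) by blast
  then obtain t0 where t0: "t0 \<in> T" "u \<in> Vt t0" unfolding GS_iff by blast
  define NC where "NC = {s\<in>T. Vt s \<inter> C \<noteq> {}}"
  have "NC \<subseteq> T" "NC \<noteq> {}" using t0 u unfolding NC_def by auto
  then obtain t where t: "t \<in> NC" "\<forall>a\<in>NC. (a,t) \<in> le \<longrightarrow> a = t" using minimal_exists by meson
  have tT: "t \<in> T" using t unfolding NC_def by blast
  have notS: "a \<notin> S" if "a \<in> NC" for a
  proof
    assume "a \<in> S"
    then have "Vt a \<subseteq> GS Vt S" unfolding GS_def by blast
    then show False using that CV unfolding NC_def by blast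
  qed
  have tS: "t \<notin> S" using notS t(1) by blast
  have sub_C: "Vt a \<subseteq> C" if "a \<in> NC" for a
  proof (rule comp_max[OF comp])
    have aT: "a \<in> T" using that unfolding NC_def by blast
    show "connected_in E (Vt a)" using Vt_conn aT by blast
    show "Vt a \<subseteq> V - GS Vt S" using VtS[OF aT notS[OF that] ST] Vt_V[OF aT] by blast
    show "Vt a \<inter> C \<noteq> {}" using that unfolding NC_def by blast
  qed
  have VtC: "Vt t \<subseteq> C" using sub_C t(1) by blast
  have sdS: "sdown le t \<subseteq> S"
  proof
    fix s assume s: "s \<in> sdown le t"
    show "s \<in> S"
    proof (rule ccontr)
      assume sS: "s \<notin> S"
      obtain u' where u': "u' \<in> sdown le t" "(u',t) \<in> contraction E T Vt" "(s,u') \<in> le"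
        using ce_cof[OF tT s] by blast
      have u'T: "u' \<in> T" using u'(2) unfolding ce_iff by blast
      have u'S: "u' \<notin> S" using closed_down[OF cS _ u'(3)] sS by blast
      obtain x y where xy: "x \<in> Vt u'" "y \<in> Vt t" "(x,y) \<in> E" using u'(2) unfolding ce_iff by blast
      have "connected_in E (Vt u' \<union> Vt t)"
        using conn_Un_edge[OF Vt_conn[OF u'T] Vt_conn[OF tT] xy] .
      moreover have "Vt u' \<union> Vt t \<subseteq> V - GS Vt S"
        using VtS[OF u'T u'S ST] VtS[OF tT tS ST] Vt_V[OF u'T] Vt_V[OF tT] by blast
      moreover have "(Vt u' \<union> Vt t) \<inter> C \<noteq> {}" using VtC Vt_ne[OF tT] by blast
      ultimately have "Vt u' \<union> Vt t \<subseteq> C" using comp_max[OF comp] by blast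
      then have "u' \<in> NC" using Vt_ne[OF u'T] u'T unfolding NC_def by blast
      then have "u' = t" using t(2) u'(1) unfolding sdown_def by blast
      then show False using u'(1) unfolding sdown_def by blast
    qed
  qed
  have CZ: "C \<inter> GS Vt (sdown le t) = {}" using CV sdS unfolding GS_def by blast
  consider (root) "sdown le t = {}"
    | (succ) p where "p \<in> sdown le t" "\<forall>x\<in>sdown le t. (x,p) \<in> le"
    | (lim) "sdown le t \<noteq> {}" "\<forall>m\<in>sdown le t. \<exists>s\<in>sdown le t. (m,s) \<in> le \<and> m \<noteq> s"
  proof (cases "sdown le t = {}")
    case True then show ?thesis using that(1) by blast
  next
    case False
    show ?thesis
    proof (cases "\<exists>p\<in>sdown le t. \<forall>x\<in>sdown le t. (x,p) \<in> le")
      case True then show ?thesis using that(2) by blast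
    next
      case nm: False
      have "\<forall>m\<in>sdown le t. \<exists>s\<in>sdown le t. (m,s) \<in> le \<and> m \<noteq> s"
      proof
        fix m assume m: "m \<in> sdown le t"
        then obtain x where x: "x \<in> sdown le t" "(x,m) \<notin> le" using nm by blast
        have "(x,m) \<in> le \<or> (m,x) \<in> le" using down_total m x unfolding sdown_def by blast
        then have "(m,x) \<in> le" using x by blast
        moreover have "m \<noteq> x" using x(2) m le_refl le_T1 unfolding sdown_def by blast
        ultimately show "\<exists>s\<in>sdown le t. (m,s) \<in> le \<and> m \<noteq> s" using x(1) by blast
      qed
      then show ?thesis using that(3) False by blast
    qed
  qed
  then show "finite {h\<in>GS Vt S. \<exists>c\<in>C. (c, h) \<in> E}"
  proof cases
    case root
    obtain s where s: "s \<in> S" using Sne by blast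
    obtain r where r: "r \<in> T" "\<forall>x\<in>T. (r,x) \<in> le" using root_exists by blast
    have "r \<in> S" using closed_down[OF cS s] r ST s by blast
    moreover have "r = t" using r tT root unfolding sdown_def by blast
    ultimately show ?thesis using tS by blast
  next
    case lim
    have inf: "infinite {u\<in>sdown le t. (u,t) \<in> contraction E T Vt}"
      using lim_infinite[OF tT lim] .
    have sub: "{u\<in>sdown le t. (u,t) \<in> contraction E T Vt} \<subseteq> {u\<in>W0. (u,t) \<in> contraction E T Vt}"
      using W0_eq sdS ST by blast
    obtain u where u: "u \<in> sdown le t" "t \<in> Fn u"
      using catch[OF _ inf sub] W0_eq tT by blast
    have "u \<in> S" using u(1) sdS by blast
    moreover have "(u,t) \<in> Rel" unfolding Rel_def using u ST tT \<open>u \<in> S\<close> by blast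
    ultimately have "t \<in> S" using cS unfolding closed_def by blast
    then show ?thesis using tS by blast
  next
    case (succ p)
    have pS: "p \<in> S" using succ(1) sdS by blast
    have pT: "p \<in> T" using pS ST by blast
    have sdeq: "sdown le t = down le p"
    proof
      show "sdown le t \<subseteq> down le p" using succ(2) unfolding down_def by blast
      show "down le p \<subseteq> sdown le t"
      proof
        fix x assume x: "x \<in> down le p"
        have pt: "(p,t) \<in> le" "p \<noteq> t" using succ(1) unfolding sdown_def by auto
        have "(x,t) \<in> le" using x pt le_trans unfolding down_def by blast
        moreover have "x \<noteq> t" using x pt le_antisym unfolding down_def by blast
        ultimately show "x \<in> sdown le t" unfolding sdown_def by blast
      qed
    qed
    have finNb: "finite (Nb t)"
    proof (rule ccontr)
      assume "infinite (Nb t)"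
      then have "t \<in> badch p" unfolding badch_def using tT sdeq by blast
      then have "(p,t) \<in> Rel" unfolding Rel_def using pT tT by blast
      then have "t \<in> S" using cS pS unfolding closed_def by blast
      then show False using tS by blast
    qed
    have CZt: "C \<subseteq> Zt t" using CV sdS unfolding Zt_def GS_def by blast
    have "{h\<in>GS Vt S. \<exists>c\<in>C. (c, h) \<in> E} \<subseteq> Nb t"
    proof
      fix h assume "h \<in> {h\<in>GS Vt S. \<exists>c\<in>C. (c, h) \<in> E}"
      then obtain c s where h: "s \<in> S" "h \<in> Vt s" "c \<in> C" "(c,h) \<in> E" unfolding GS_iff by blast
      have sT: "s \<in> T" using h(1) ST by blast
      have hC: "h \<notin> C" using h(1,2) CV unfolding GS_def by blast
      have vC: "vt t \<in> C" using VtC vt[OF tT] by blast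
      have rc: "reach C (vt t) c" using conn_reach[OF Cconn vC h(3)] .
      have cD: "c \<in> Dt t"
      proof -
        have "reach (Zt t) (vt t) c" using rc CZt by (rule reach_mono)
        then show ?thesis unfolding Dt_def rclass_def by blast
      qed
      have inv: "Inv t C c" using key[OF tT CZ vt[OF tT] rc] .
      have "s \<in> sdown le t"
      proof (cases "c \<in> GS Vt T")
        case True
        then obtain a where a: "a \<in> T" "c \<in> Vt a" unfolding GS_iff by blast
        have ta: "(t,a) \<in> le" using inv a unfolding Inv_def by blast
        have "a \<in> NC" using a h(3) unfolding NC_def by blast
        then have aS: "a \<notin> S" using notS by blast
        then have "a \<noteq> s" using h(1) by blast
        then have "(a,s) \<in> contraction E T Vt" unfolding ce_iff using a sT h(2,4) by blast
        then have "(a,s) \<in> le \<or> (s,a) \<in> le" using ce_comp by blast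
        then show ?thesis using slt[OF cS h(1) tS ta] by blast
      next
        case False
        then obtain a p where ap: "a \<in> T" "(t,a) \<in> le" "gpath E p" "2 \<le> length p" "hd p \<in> Vt a"
          "last p = c" "set (tl p) \<inter> GS Vt T = {}" "set p \<subseteq> C"
          using inv unfolding Inv_def by blast
        have "h \<notin> set p" using hC ap(8) by blast
        moreover have "(last p, h) \<in> E" using ap(6) h(4) by simp
        ultimately have "(a,s) \<in> le \<or> (s,a) \<in> le"
          using path_link[OF ap(1) ap(3) ap(4) ap(5) ap(7) _ h(2) sT] by blast
        then show ?thesis using slt[OF cS h(1) tS ap(2)] by blast
      qed
      then have "h \<in> GS Vt (sdown le t)" using h(2) unfolding GS_iff by blast
      then show "h \<in> Nb t" unfolding Nb_def using cD h(4) by blast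
    qed
    then show ?thesis using finNb finite_subset by blast
  qed
qed

end



lemma fin_less: "finite A \<Longrightarrow> infinite B \<Longrightarrow> |A| <o |B|"
  using finite_ordLess_infinite[OF card_of_Well_order card_of_Well_order] by (simp add: Field_card_of)

lemma cnt_less: assumes "countable A" "uncountable B" shows "|A| <o |B|"
proof -
  have "|A| \<le>o natLeq" using assms(1) countable_card_le_natLeq by blast
  moreover have "\<not> |B| \<le>o natLeq" using assms(2) countable_card_le_natLeq by blast
  then have "natLeq <o |B|" using not_ordLeq_iff_ordLess[OF natLeq_Well_order card_of_Well_order] by blast
  ultimately show ?thesis using ordLeq_ordLess_trans by blast
qed

lemma insert_less: assumes "|A| <o |B|" "infinite B" shows "|insert x A| <o |B|"
proof -
  have "|{x}| <o |B|" using fin_less assms(2) by blast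
  then have "|{x} \<union> A| <o |B|" using card_of_Un_ordLess_infinite assms by blast
  then show ?thesis by simp
qed

lemma UN_less:
  assumes B: "uncountable B" and X: "|X| <o |B|" and f: "\<forall>x\<in>X. countable (f x)"
  shows "|\<Union>x\<in>X. f x| <o |B|"
proof (cases "finite X")
  case True
  then have "countable (\<Union>x\<in>X. f x)" using f by (intro countable_UN) (auto intro: countable_finite)
  then show ?thesis using cnt_less B by blast
next
  case False
  have "\<forall>x\<in>X. |f x| \<le>o |X|"
  proof
    fix x assume "x \<in> X"
    then have "|f x| \<le>o natLeq" using f countable_card_le_natLeq by blast
    moreover have "natLeq \<le>o |X|" using False infinite_iff_natLeq_ordLeq by blast
    ultimately show "|f x| \<le>o |X|" using ordLeq_transitive by blast
  qed
  then have "|\<Union>x\<in>X. f x| \<le>o |X|"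
    using card_of_UNION_ordLeq_infinite[OF False ordIso_imp_ordLeq[OF card_of_refl]] by blast
  then show ?thesis using X ordLeq_ordLess_trans by blast
qed

lemma wo_finite_max:
  assumes wo: "Well_order r" and fin: "finite F" and ne: "F \<noteq> {}" and sub: "F \<subseteq> Field r"
  shows "\<exists>m\<in>F. \<forall>x\<in>F. (x,m) \<in> r"
  using fin ne sub
proof (induction rule: finite_ne_induct)
  case (singleton x)
  then show ?case using wo unfolding well_order_on_def linear_order_on_def partial_order_on_def
    preorder_on_def refl_on_def by auto
next
  case (insert x F)
  then obtain m where m: "m \<in> F" "\<forall>y\<in>F. (y,m) \<in> r" by blast
  have tot: "total_on (Field r) r" and tr: "trans r" and rf: "refl_on (Field r) r"
    using wo unfolding well_order_on_def linear_order_on_def partial_order_on_def preorder_on_def by auto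
  have xm: "x \<in> Field r" "m \<in> Field r" using insert(5) m(1) by auto
  show ?case
  proof (cases "(x,m) \<in> r")
    case True then show ?thesis using m by blast
  next
    case False
    have "x \<noteq> m" using False rf xm unfolding refl_on_def by blast
    then have mx: "(m,x) \<in> r" using tot xm False unfolding total_on_def by blast
    have "(y,x) \<in> r" if "y \<in> insert x F" for y
    proof (cases "y = x")
      case True then show ?thesis using rf xm(1) unfolding refl_on_def by blast
    next
      case False
      then have "(y,m) \<in> r" using that m by blast
      then show ?thesis using mx tr unfolding trans_def by blast
    qed
    then show ?thesis by blast
  qed
qed

lemma under_split: "under r b = insert b (underS r b) \<or> under r b = underS r b"
  unfolding under_def underS_def by auto

lemma under_less:
  assumes "Card_order r" "b \<in> Field r" "infinite (Field r)"
  shows "|under r b| <o r"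
proof -
  have u: "|underS r b| <o r" using card_of_underS[OF assms(1,2)] .
  have fi: "|Field r| =o r" using card_of_Field_ordIso[OF assms(1)] .
  have u': "|underS r b| <o |Field r|" using ordLess_ordIso_trans[OF u ordIso_symmetric[OF fi]] .
  have "|insert b (underS r b)| <o |Field r|" using insert_less[OF u' assms(3)] .
  then have "|under r b| <o |Field r|" using under_split[of r b] u' by (elim disjE) simp_all
  then show ?thesis using ordLess_ordIso_trans[OF _ fi] by blast
qed

context setting begin

lemma T_unc: "uncountable T"
proof
  assume "countable T"
  then have "countable (GS Vt T)" unfolding GS_def using Vt_count by (intro countable_UN) auto
  then have "countable U" using UG countable_subset by blast
  then show False using unc by blast
qed

lemma cl_less: assumes "|X| <o |T|" shows "|cl X| <o |T|"
proof -
  have "|X \<inter> T| <o |T|" using card_of_mono1[of "X \<inter> T" X] assms ordLeq_ordLess_trans by blast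
  then show ?thesis unfolding cl_UN using UN_less[OF T_unc, of "X \<inter> T" "\<lambda>x. Rel\<^sup>* `` {x}"] Rel_star_countable by blast
qed

end



context setting begin

lemma main:
  "\<exists>(I :: 't set) rI Ts. cf_index T rI I \<and>
     (\<forall>i\<in>I. rooted_subtree T le (Ts i) \<and> infinite (Ts i) \<and>
        (card_of (Ts i), card_of T) \<in> ordLess \<and>
        finite_adhesion V E (GS Vt (Ts i)) U) \<and>
     (\<forall>i\<in>I. \<forall>j\<in>I. (j, i) \<in> rI \<longrightarrow> Ts j \<subseteq> Ts i) \<and>
     (\<Union>i\<in>I. Ts i) = T \<and>
     (\<forall>i\<in>I. is_limit rI i \<longrightarrow> Ts i = (\<Union>j\<in>{j\<in>I. (j, i) \<in> rI \<and> j \<noteq> i}. Ts j))"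
proof -
  have Tinf: "infinite T" using T_unc countable_finite by blast
  have wT: "Well_order |T|" by (rule card_of_Well_order)
  have FT: "Field |T| = T" by (rule Field_card_of)
  have transT: "trans |T|" using wT unfolding well_order_on_def linear_order_on_def partial_order_on_def preorder_on_def by auto
  have reflT: "x \<in> T \<Longrightarrow> (x,x) \<in> |T|" for x using wT FT unfolding well_order_on_def linear_order_on_def partial_order_on_def preorder_on_def refl_on_def by auto
  have totT: "x \<in> T \<Longrightarrow> y \<in> T \<Longrightarrow> x \<noteq> y \<Longrightarrow> (x,y) \<in> |T| \<or> (y,x) \<in> |T|" for x y
    using wT FT unfolding well_order_on_def linear_order_on_def total_on_def by auto
  have antiT: "(x,y) \<in> |T| \<Longrightarrow> (y,x) \<in> |T| \<Longrightarrow> x = y" for x y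
    using wT unfolding well_order_on_def linear_order_on_def partial_order_on_def antisym_def by auto
  let ?Cof = "{A. cofinal_set |T| A}"
  have TCof: "T \<in> ?Cof" unfolding cofinal_set_def using FT reflT by auto
  obtain z where z: "z \<in> (\<lambda>A. card_of A) ` ?Cof" "\<And>y. (y,z) \<in> ordLess \<Longrightarrow> y \<notin> (\<lambda>A. card_of A) ` ?Cof"
    using wfE_min[OF wf_ordLess, of "|T|" "(\<lambda>A. card_of A) ` ?Cof"] TCof by blast
  then obtain A0 where A0: "cofinal_set |T| A0" "z = |A0|" by blast
  have A0min: "|A0| \<le>o |A|" if "cofinal_set |T| A" for A
  proof -
    have "\<not> |A| <o |A0|" using z(2) A0(2) that by blast
    then show ?thesis using not_ordLess_iff_ordLeq[OF card_of_Well_order card_of_Well_order] by blast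
  qed
  define rI where "rI = |A0|"
  have cf: "cf_index T rI A0" unfolding cf_index_def rI_def
    using card_of_card_order_on A0(1) card_of_refl A0min by blast
  have A0T: "A0 \<subseteq> T" using A0(1) FT unfolding cofinal_set_def by auto
  have cofA0: "\<forall>x\<in>T. \<exists>b\<in>A0. (x,b) \<in> |T|" using A0(1) FT unfolding cofinal_set_def by auto
  have Tne: "T \<noteq> {}" using Tinf by auto
  have A0ne: "A0 \<noteq> {}" using cofA0 Tne by blast
  have A0inf: "infinite A0"
  proof
    assume fin: "finite A0"
    obtain m where m: "m \<in> A0" "\<forall>x\<in>A0. (x,m) \<in> |T|" using wo_finite_max[OF wT fin A0ne] A0T FT by auto
    have "T \<subseteq> under |T| m"
    proof
      fix x assume "x \<in> T"
      then obtain b where "b \<in> A0" "(x,b) \<in> |T|" using cofA0 by blast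
      then have "(x,m) \<in> |T|" using m transT unfolding trans_def by blast
      then show "x \<in> under |T| m" unfolding under_def by blast
    qed
    then have "|T| \<le>o |under |T| m|" by (rule card_of_mono1)
    moreover have "|under |T| m| <o |T|" using under_less[OF card_of_Card_order, of m T] m A0T FT Tinf by auto
    ultimately show False using not_ordLess_ordLeq by blast
  qed
  have wI: "Well_order rI" unfolding rI_def by (rule card_of_Well_order)
  have FI: "Field rI = A0" unfolding rI_def by (rule Field_card_of)
  have transI: "trans rI" using wI unfolding well_order_on_def linear_order_on_def partial_order_on_def preorder_on_def by auto
  have reflI: "x \<in> A0 \<Longrightarrow> (x,x) \<in> rI" for x using wI FI unfolding well_order_on_def linear_order_on_def partial_order_on_def preorder_on_def refl_on_def by auto
  have totI: "x \<in> A0 \<Longrightarrow> y \<in> A0 \<Longrightarrow> x \<noteq> y \<Longrightarrow> (x,y) \<in> rI \<or> (y,x) \<in> rI" for x y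
    using wI FI unfolding well_order_on_def linear_order_on_def total_on_def by auto
  have antiI: "(x,y) \<in> rI \<Longrightarrow> (y,x) \<in> rI \<Longrightarrow> x = y" for x y
    using wI unfolding well_order_on_def linear_order_on_def partial_order_on_def antisym_def by auto
  have rIF: "(x,y) \<in> rI \<Longrightarrow> x \<in> A0 \<and> y \<in> A0" for x y using FI unfolding Field_def by blast
  have wfI: "wf (rI - Id)" using wI unfolding well_order_on_def by auto
  have nomax: "\<exists>k\<in>A0. (a,k) \<in> rI \<and> k \<noteq> a" if a: "a \<in> A0" for a
  proof (rule ccontr)
    assume "\<not> (\<exists>k\<in>A0. (a,k) \<in> rI \<and> k \<noteq> a)"
    then have "\<forall>k\<in>A0. (k,a) \<in> rI" using totI a reflI by blast
    then have "A0 \<subseteq> under rI a" unfolding under_def by blast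
    then have "|A0| \<le>o |under rI a|" by (rule card_of_mono1)
    moreover have "|under rI a| <o rI" using under_less[OF card_of_Card_order, of a A0] a A0inf
      unfolding rI_def by (simp add: Field_card_of)
    ultimately show False unfolding rI_def using not_ordLess_ordLeq by blast
  qed
  obtain Z0 where Z0: "Z0 \<subseteq> T" "countable Z0" "infinite Z0" using infinite_countable_subset'[OF Tinf] by blast
  define M where "M j = Z0 \<union> (\<Union>k\<in>under rI j. under |T| k)" for j
  have MT: "M j \<subseteq> T" for j
  proof -
    have "under |T| k \<subseteq> T" for k using FT unfolding under_def Field_def by blast
    then show ?thesis unfolding M_def using Z0(1) by blast
  qed
  have Mmono: "M j \<subseteq> M i" if "(j,i) \<in> rI" for i j
    using that transI unfolding M_def under_def trans_def by blast
  have Mless: "|M j| <o |T|" if j: "j \<in> A0" for j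
  proof -
    have ul: "|under rI j| <o |A0|" using under_less[OF card_of_Card_order, of j A0] j A0inf
      unfolding rI_def by (simp add: Field_card_of)
    have "\<not> cofinal_set |T| (under rI j)"
    proof
      assume "cofinal_set |T| (under rI j)"
      then have "|A0| \<le>o |under rI j|" using A0min by blast
      then show False using ul not_ordLess_ordLeq by blast
    qed
    moreover have "under rI j \<subseteq> Field |T|" using rIF A0T FT unfolding under_def by blast
    ultimately obtain a where a: "a \<in> T" "\<forall>b\<in>under rI j. (a,b) \<notin> |T|"
      unfolding cofinal_set_def FT by blast
    have "(\<Union>k\<in>under rI j. under |T| k) \<subseteq> underS |T| a"
    proof
      fix x assume "x \<in> (\<Union>k\<in>under rI j. under |T| k)"
      then obtain k where k: "k \<in> under rI j" "(x,k) \<in> |T|" unfolding under_def by blast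
      have kT: "k \<in> T" using k(1) rIF A0T unfolding under_def by blast
      have ka: "(k,a) \<in> |T|" using a k(1) kT totT reflT by metis
      have xa: "(x,a) \<in> |T|" using k(2) ka transT unfolding trans_def by blast
      have "x \<noteq> a" using k a by blast
      then show "x \<in> underS |T| a" using xa unfolding underS_def by blast
    qed
    then have "M j \<subseteq> Z0 \<union> underS |T| a" unfolding M_def by blast
    moreover have "|Z0 \<union> underS |T| a| <o |T|"
    proof (rule card_of_Un_ordLess_infinite[OF Tinf])
      show "|Z0| <o |T|" using cnt_less[OF Z0(2) T_unc] .
      show "|underS |T| a| <o |T|" using card_of_underS[OF card_of_Card_order, of a T] a FT by simp
    qed
    ultimately show ?thesis using card_of_mono1 ordLeq_ordLess_trans by blast
  qed
  define Ts where "Ts i = (\<Union>j\<in>{j\<in>A0. (j,i) \<in> rI \<and> \<not> is_limit rI j}. cl (M j))" for i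
  obtain m0 where m0: "m0 \<in> A0" "\<And>y. (y,m0) \<in> rI - Id \<Longrightarrow> y \<notin> A0"
    using wfE_min'[OF wfI A0ne] by metis
  have m0le: "(m0,i) \<in> rI" if "i \<in> A0" for i
  proof (cases "i = m0")
    case True then show ?thesis using reflI that by simp
  next
    case False
    then have "(i,m0) \<notin> rI" using m0(2) that by blast
    then show ?thesis using totI[OF that m0(1) False] by blast
  qed
  have m0nl: "\<not> is_limit rI m0"
  proof
    assume "is_limit rI m0"
    then obtain j where "(j,m0) \<in> rI" "j \<noteq> m0" unfolding is_limit_def by blast
    then show False using m0(2) rIF by blast
  qed
  have Tsclosed: "closed (Ts i)" for i
  proof -
    have "closed (\<Union>(cl ` M ` {j\<in>A0. (j,i) \<in> rI \<and> \<not> is_limit rI j}))"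
      by (rule closed_Union) (auto intro: cl_closed)
    then show ?thesis unfolding Ts_def by (simp add: image_image)
  qed
  have Z0Ts: "Z0 \<subseteq> Ts i" if "i \<in> A0" for i
  proof -
    have "Z0 \<subseteq> M m0" unfolding M_def by blast
    also have "\<dots> \<subseteq> cl (M m0)" using cl_sup MT by blast
    also have "\<dots> \<subseteq> Ts i" unfolding Ts_def using m0(1) m0le[OF that] m0nl by blast
    finally show ?thesis .
  qed
  have Tsmono: "Ts j \<subseteq> Ts i" if "(j,i) \<in> rI" for i j
    unfolding Ts_def using that transI unfolding trans_def by blast
  have Tssub: "Ts i \<subseteq> cl (M i)" for i
    unfolding Ts_def using Mmono cl_mono by blast
  have P1: "\<forall>i\<in>A0. rooted_subtree T le (Ts i) \<and> infinite (Ts i) \<and>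
        (card_of (Ts i), card_of T) \<in> ordLess \<and> finite_adhesion V E (GS Vt (Ts i)) U"
  proof
    fix i assume i: "i \<in> A0"
    have inf: "infinite (Ts i)" using Z0Ts[OF i] Z0(3) infinite_super by blast
    have "|Ts i| \<le>o |cl (M i)|" using Tssub card_of_mono1 by blast
    moreover have "|cl (M i)| <o |T|" using cl_less Mless[OF i] by blast
    ultimately have less: "|Ts i| <o |T|" using ordLeq_ordLess_trans by blast
    have "Ts i \<noteq> {}" using inf by auto
    then have fa: "finite_adhesion V E (GS Vt (Ts i)) U" using main_fa Tsclosed by blast
    show "rooted_subtree T le (Ts i) \<and> infinite (Ts i) \<and> (card_of (Ts i), card_of T) \<in> ordLess \<and>
        finite_adhesion V E (GS Vt (Ts i)) U" using closed_rooted[OF Tsclosed] inf less fa by blast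
  qed
  have P2: "\<forall>i\<in>A0. \<forall>j\<in>A0. (j, i) \<in> rI \<longrightarrow> Ts j \<subseteq> Ts i" using Tsmono by blast
  have P3: "(\<Union>i\<in>A0. Ts i) = T"
  proof
    show "(\<Union>i\<in>A0. Ts i) \<subseteq> T" using Tsclosed unfolding closed_def by blast
    show "T \<subseteq> (\<Union>i\<in>A0. Ts i)"
    proof
      fix x assume x: "x \<in> T"
      then obtain a where a: "a \<in> A0" "(x,a) \<in> |T|" using cofA0 by blast
      let ?S = "{k\<in>A0. (a,k) \<in> rI \<and> k \<noteq> a}"
      have Sne: "?S \<noteq> {}" using nomax[OF a(1)] by blast
      obtain j where j: "j \<in> ?S" "\<And>y. (y,j) \<in> rI - Id \<Longrightarrow> y \<notin> ?S"
        by (rule wfE_min'[OF wfI Sne]) blast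
      have jnl: "\<not> is_limit rI j"
      proof
        assume lim: "is_limit rI j"
        have "(a,j) \<in> rI" "a \<noteq> j" using j(1) by auto
        then obtain k where k: "(a,k) \<in> rI" "a \<noteq> k" "(k,j) \<in> rI" "k \<noteq> j"
          using lim unfolding is_limit_def by blast
        have "k \<in> ?S" using k rIF by blast
        moreover have "(k,j) \<in> rI - Id" using k by blast
        ultimately show False using j(2) by blast
      qed
      have jA: "j \<in> A0" "(a,j) \<in> rI" using j(1) by auto
      have "x \<in> M j" unfolding M_def under_def using jA(2) a(2) by blast
      then have "x \<in> cl (M j)" using cl_sup MT by blast
      then have "x \<in> Ts j" unfolding Ts_def using jA(1) reflI[OF jA(1)] jnl by blast
      then show "x \<in> (\<Union>i\<in>A0. Ts i)" using jA(1) by blast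
    qed
  qed
  have P4: "\<forall>i\<in>A0. is_limit rI i \<longrightarrow> Ts i = (\<Union>j\<in>{j\<in>A0. (j, i) \<in> rI \<and> j \<noteq> i}. Ts j)"
  proof (intro ballI impI)
    fix i assume i: "i \<in> A0" and lim: "is_limit rI i"
    show "Ts i = (\<Union>j\<in>{j\<in>A0. (j, i) \<in> rI \<and> j \<noteq> i}. Ts j)"
    proof
      show "(\<Union>j\<in>{j\<in>A0. (j, i) \<in> rI \<and> j \<noteq> i}. Ts j) \<subseteq> Ts i" using Tsmono by blast
      show "Ts i \<subseteq> (\<Union>j\<in>{j\<in>A0. (j, i) \<in> rI \<and> j \<noteq> i}. Ts j)"
      proof
        fix x assume "x \<in> Ts i"
        then obtain j where j: "j \<in> A0" "(j,i) \<in> rI" "\<not> is_limit rI j" "x \<in> cl (M j)"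
          unfolding Ts_def by blast
        have "j \<noteq> i" using j(3) lim by blast
        moreover have "x \<in> Ts j" unfolding Ts_def using j reflI by blast
        ultimately show "x \<in> (\<Union>j\<in>{j\<in>A0. (j, i) \<in> rI \<and> j \<noteq> i}. Ts j)" using j(1,2) by blast
      qed
    qed
  qed
  show ?thesis
    apply (rule exI[of _ A0], rule exI[of _ rI], rule exI[of _ Ts])
    using cf P1 P2 P3 P4 by (intro conjI)
qed

end

theorem lemma5p1:
  fixes V :: "'v set" and E :: "('v \<times> 'v) set" and U :: "'v set"
    and T :: "'t set" and le :: "('t \<times> 't) set" and Vt :: "'t \<Rightarrow> 'v set"
  assumes "connected_graph V E"
    and "U \<subseteq> V" and "uncountable U"
    and "\<forall>B EH. rooted_minor V E U B EH \<and> (\<forall>X\<in>B. countable X)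
           \<longrightarrow> countable_colouring_number B EH"
    and "normal_semi_partition_tree V E T le Vt"
    and "slim T le Vt" and "U_rooted_tree T Vt U"
    and "U \<subseteq> GS Vt T"
  shows "\<exists>(I :: 't set) rI Ts. cf_index T rI I \<and>
     (\<forall>i\<in>I. rooted_subtree T le (Ts i) \<and> infinite (Ts i) \<and>
        (card_of (Ts i), card_of T) \<in> ordLess \<and>
        finite_adhesion V E (GS Vt (Ts i)) U) \<and>
     (\<forall>i\<in>I. \<forall>j\<in>I. (j, i) \<in> rI \<longrightarrow> Ts j \<subseteq> Ts i) \<and>
     (\<Union>i\<in>I. Ts i) = T \<and>
     (\<forall>i\<in>I. is_limit rI i \<longrightarrow> Ts i = (\<Union>j\<in>{j\<in>I. (j, i) \<in> rI \<and> j \<noteq> i}. Ts j))"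
proof -
  interpret S: setting V E U T le Vt
    by (rule setting.intro) (rule assms)+
  show ?thesis by (rule S.main)
qed


end
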